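(* Under the setting below, for any $k\in[K]$, any $h\in[H-1]$ and any policy $\pi$, $$\sum_{\tau_h}\big\|M^k_{o_h,a_h,h}\cdots M^k_{o_1,a_1,1}q^k_0-M_{o_h,a_h,h}\cdots M_{o_1,a_1,1}q_0\big\|_1\pi(\tau_h)\le\frac{|\mathcal{U}_A|}{\alpha}\Big(\sum_{l=1}^h\sum_{\tau_l}\big\|[M^k_{o_l,a_l,l}-M_{o_l,a_l,l}]b_{\tau_{l-1}}\big\|_1\pi(\tau_l)+\|q^k_0-q_0\|_1\Big),$$ where $M^k_{o,a,h}=M_{o,a,h;f^k}$, $q^k_0=q_{0;f^k}$ for the model $f^k$ selected by CRANE at iteration $k$, $M_{o,a,h},q_0$ are those of the true model $f^*$, and $b_{\tau_l}=M_{o_l,a_l,l}\cdots M_{o_1,a_1,1}q_0$ ($b_{\tau_0}=q_0$).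
   Context: Process: finite $\mathcal{O},\mathcal{A}$, horizon $H$; histories $\tau_h=(o_1,a_1,\dots,o_h,a_h)$; policies pick $a_h\sim\pi_h(\cdot\mid\tau_{h-1},o_h)$; $\pi(\tau_h)=\prod_{l\le h}\pi_l(a_l\mid\tau_{l-1},o_l)$; reward $r_h(o_h,a_h)$; $V^\pi_f$ and $\mathbb{P}^\pi_f$ denote value and trajectory probabilities in model $f$. A test starting at step $h$ is $t=(o_h,\dots,o_{h+W-1},a_h,\dots,a_{h+W-2})$; $\mathbb{P}_f(t\mid\tau_{h-1})$ is the probability of observing $o_{h:h+W-1}$ when executing $a_{h:h+W-2}$ after $\tau_{h-1}$ ($0$ if unreachable). A set $\mathcal{U}_h$ of tests starting at $h$ is a core test set for $f$ if for every test $t$ starting at $h$ there is a history-independent $m_{t,h;f}$ with $\mathbb{P}_f(t\mid\tau_{h-1})=\langle m_{t,h;f},q_{\tau_{h-1};f}\rangle$, $q_{\tau_{h-1};f}=[\mathbb{P}_f(u\mid\tau_{h-1})]_{u\in\mathcal{U}_h}$; $q_{0;f}=[\mathbb{P}_f(u)]_{u\in\mathcal{U}_1}$; $M_{o,a,h;f}$ has rows $m_{(o,a,u),h;f}^\top$, $u\in\mathcal{U}_{h+1}$. $\mathcal{U}_{A,h}$: action sequences in $\mathcal{U}_h$; $|\mathcal{U}_A|=\max_h|\mathcal{U}_{A,h}|$. $d_{\mathrm{PSR},h;f}$ is the rank of the matrix with entries $\mathbb{P}_f(t\mid\tau_h)$. Core matrix $K_{h;f}$ ($h\ge1$): columns $q_{\tau_h^1;f},\dots,q_{\tau_h^{d_{\mathrm{PSR},h;f}};f}$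 for histories whose predictive states span all $q_{\tau_h;f}$, chosen to minimize $\|K_{h;f}^\dagger\|_{1\to1}$; $K_{0;f}=q_{0;f}$. Standing assumptions: $\mathcal{F}$ is a model class with $f^*\in\mathcal{F}$; every $f\in\mathcal{F}$ is a valid PSR with core test sets $\{\mathcal{U}_h\}_{h\in[H]}$ and $\|K_{h;f}^\dagger\|_{1\to1}\le1/\alpha$ for $h\in\{0,\dots,H-1\}$; every $o\in\mathcal{O}$ belongs to $\mathcal{U}_H$. Convention: for every $f\in\mathcal{F}$ the vectors $m_{(o,a,u),h;f}$ are chosen in the column space of $K_{h-1;f}$ (such a choice exists and leaves $\mathbb{P}^\pi_f$ unchanged). Algorithm CRANE (input $\beta$): $\mathcal{B}^1=\mathcal{F}$, $\mathcal{D}=\emptyset$. For $k=1,\dots,K$: $(f^k,\pi^k)\in\arg\max_{f\in\mathcal{B}^k,\pi}V^\pi_f$; for each $h\in\{0,\dots,H-1\}$ and $u_a\in\mathcal{U}_{A,h+1}$, execute the policy following $\pi^k$ at steps $1,\dots,h-1$, a uniform action at step $h$ (if $h\ge1$), the actions of $u_a$ from step $h+1$, uniform afterwards, adding (policy, $\tau_H$) to $\mathcal{D}$; $\mathcal{B}^{k+1}=\{f\in\mathcal{F}:\sum_{\mathcal{D}}\log\mathbb{P}^\pi_f(\tau_H)\ge\max_{f'\in\mathcal{F}}\sum_{\mathcal{D}}\log\mathbb{P}^\pi_{f'}(\tau_H)-\beta\}$. *)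

theory Defs
  imports Complex_Main
begin

(* Histories tau_h = (o_1,a_1,...,o_h,a_h) are lists of (observation, action) pairs.
   A test starting at step h, t = (o_h,...,o_{h+W-1}, a_h,...,a_{h+W-2}), is encoded as the
   pair ([(o_h,a_h),...,(o_{h+W-2},a_{h+W-2})], o_{h+W-1}); its length is W = length (fst t) + 1.
   A model f is given by its conditional observation probabilities: f tau ob is the probability
   of observing ob at step length tau + 1 after history tau.
   A policy pi gives pi tau ob a = pi_h(a | tau_{h-1}, o_h) with h = length tau + 1.
   Vectors indexed by a finite set of tests U are functions test => real of which only the
   values on U matter. *)

type_synonym ('ob,'a) hist = "('ob \<times> 'a) list"
type_synonym ('ob,'a) test = "('ob \<times> 'a) list \<times> 'ob"
type_synonym ('ob,'a) model = "('ob \<times> 'a) list \<Rightarrow> 'ob \<Rightarrow> real"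
type_synonym ('ob,'a) policy = "('ob \<times> 'a) list \<Rightarrow> 'ob \<Rightarrow> 'a \<Rightarrow> real"

definition valid_model :: "nat \<Rightarrow> ('ob::finite,'a::finite) model \<Rightarrow> bool" where
  "valid_model H f \<longleftrightarrow> (\<forall>\<tau>. length \<tau> < H \<longrightarrow> (\<forall>ob. 0 \<le> f \<tau> ob) \<and> (\<Sum>ob\<in>UNIV. f \<tau> ob) = 1)"

definition valid_policy :: "nat \<Rightarrow> ('ob::finite,'a::finite) policy \<Rightarrow> bool" where
  "valid_policy H \<pi> \<longleftrightarrow>
     (\<forall>\<tau> ob. length \<tau> < H \<longrightarrow> (\<forall>a. 0 \<le> \<pi> \<tau> ob a) \<and> (\<Sum>a\<in>UNIV. \<pi> \<tau> ob a) = 1)"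

definition obs_prob :: "('ob,'a) model \<Rightarrow> ('ob,'a) hist \<Rightarrow> real" where
  "obs_prob f \<tau> = (\<Prod>i<length \<tau>. f (take i \<tau>) (fst (\<tau> ! i)))"

definition pol_prob :: "('ob,'a) policy \<Rightarrow> ('ob,'a) hist \<Rightarrow> real" where
  "pol_prob \<pi> \<tau> = (\<Prod>i<length \<tau>. \<pi> (take i \<tau>) (fst (\<tau> ! i)) (snd (\<tau> ! i)))"

definition hists :: "nat \<Rightarrow> ('ob,'a) hist set" where
  "hists h = {\<tau>. length \<tau> = h}"

text \<open>Tests starting at step h (within the horizon H).\<close>
definition tests_at :: "nat \<Rightarrow> nat \<Rightarrow> ('ob,'a) test set" where
  "tests_at H h = {t. h + length (fst t) \<le> H}"

text \<open>P_f(t | tau_{h-1}), with value 0 if tau_{h-1} is unreachable.\<close>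
definition test_prob :: "('ob,'a) model \<Rightarrow> ('ob,'a) hist \<Rightarrow> ('ob,'a) test \<Rightarrow> real" where
  "test_prob f \<tau> t =
     (if obs_prob f \<tau> > 0
      then (\<Prod>i<length (fst t). f (\<tau> @ take i (fst t)) (fst (fst t ! i))) * f (\<tau> @ fst t) (snd t)
      else 0)"

definition inner_on :: "'t set \<Rightarrow> ('t \<Rightarrow> real) \<Rightarrow> ('t \<Rightarrow> real) \<Rightarrow> real" where
  "inner_on U m x = (\<Sum>u\<in>U. m u * x u)"

definition norm1_on :: "'t set \<Rightarrow> ('t \<Rightarrow> real) \<Rightarrow> real" where
  "norm1_on U x = (\<Sum>u\<in>U. \<bar>x u\<bar>)"

text \<open>U is a core test set (starting at h) for f; predictive state q_{tau;f} = test_prob f tau on U.\<close>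
definition is_core_test_set :: "nat \<Rightarrow> ('ob,'a) model \<Rightarrow> ('ob,'a) test set \<Rightarrow> nat \<Rightarrow> bool" where
  "is_core_test_set H f U h \<longleftrightarrow> U \<subseteq> tests_at H h \<and>
     (\<forall>t\<in>tests_at H h. \<exists>m. \<forall>\<tau>\<in>hists (h - 1). test_prob f \<tau> t = inner_on U m (test_prob f \<tau>))"

text \<open>The test (ob,a,u) starting at h, for u a test starting at h+1.\<close>
definition ext_test :: "'ob \<Rightarrow> 'a \<Rightarrow> ('ob,'a) test \<Rightarrow> ('ob,'a) test" where
  "ext_test ob a u = ((ob,a) # fst u, snd u)"

definition test_actions :: "('ob,'a) test \<Rightarrow> 'a list" where
  "test_actions t = map snd (fst t)"

definition UA_card :: "nat \<Rightarrow> (nat \<Rightarrow> ('ob,'a) test set) \<Rightarrow> nat" where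
  "UA_card H U = Max ((\<lambda>h. card (test_actions ` U h)) ` {1..H})"

text \<open>Column rank d_PSR,h;f of the matrix [P_f(t | tau_h)]_{t, tau_h}.\<close>
definition lin_indep_hists :: "('ob,'a) model \<Rightarrow> ('ob,'a) test set \<Rightarrow> ('ob,'a) hist list \<Rightarrow> bool" where
  "lin_indep_hists f T hs \<longleftrightarrow>
     (\<forall>c. (\<forall>t\<in>T. (\<Sum>j<length hs. c j * test_prob f (hs ! j) t) = 0) \<longrightarrow> (\<forall>j<length hs. c j = 0))"

definition d_PSR :: "nat \<Rightarrow> ('ob,'a) model \<Rightarrow> nat \<Rightarrow> nat" where
  "d_PSR H f h = Max {n. \<exists>hs. set hs \<subseteq> hists h \<and> length hs = n \<and> lin_indep_hists f (tests_at H (Suc h)) hs}"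

text \<open>Moore-Penrose pseudo-inverse of a real I x J matrix K (X is J x I, zero off its index sets).\<close>
definition penrose :: "'r set \<Rightarrow> 'c set \<Rightarrow> ('r \<Rightarrow> 'c \<Rightarrow> real) \<Rightarrow> ('c \<Rightarrow> 'r \<Rightarrow> real) \<Rightarrow> bool" where
  "penrose I J K X \<longleftrightarrow>
     (\<forall>i\<in>I. \<forall>j\<in>J. (\<Sum>i'\<in>I. (\<Sum>j'\<in>J. K i j' * X j' i') * K i' j) = K i j) \<and>
     (\<forall>j\<in>J. \<forall>i\<in>I. (\<Sum>j'\<in>J. (\<Sum>i'\<in>I. X j i' * K i' j') * X j' i) = X j i) \<and>
     (\<forall>i\<in>I. \<forall>i'\<in>I. (\<Sum>j\<in>J. K i j * X j i') = (\<Sum>j\<in>J. K i' j * X j i)) \<and>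
     (\<forall>j\<in>J. \<forall>j'\<in>J. (\<Sum>i\<in>I. X j i * K i j') = (\<Sum>i\<in>I. X j' i * K i j))"

definition pinv :: "'r set \<Rightarrow> 'c set \<Rightarrow> ('r \<Rightarrow> 'c \<Rightarrow> real) \<Rightarrow> ('c \<Rightarrow> 'r \<Rightarrow> real)" where
  "pinv I J K = (THE X. (\<forall>j i. j \<notin> J \<or> i \<notin> I \<longrightarrow> X j i = 0) \<and> penrose I J K X)"

definition opnorm11 :: "'r set \<Rightarrow> 'c set \<Rightarrow> ('c \<Rightarrow> 'r \<Rightarrow> real) \<Rightarrow> real" where
  "opnorm11 I J X = Sup {(\<Sum>j\<in>J. \<bar>\<Sum>i\<in>I. X j i * x i\<bar>) | x. (\<Sum>i\<in>I. \<bar>x i\<bar>) \<le> 1}"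

definition Kmat :: "('ob,'a) model \<Rightarrow> ('ob,'a) hist list \<Rightarrow> ('ob,'a) test \<Rightarrow> nat \<Rightarrow> real" where
  "Kmat f hs = (\<lambda>u j. test_prob f (hs ! j) u)"

definition Kdag_norm :: "(nat \<Rightarrow> ('ob,'a) test set) \<Rightarrow> ('ob,'a) model \<Rightarrow> nat \<Rightarrow> ('ob,'a) hist list \<Rightarrow> real" where
  "Kdag_norm U f h hs = opnorm11 (U (Suc h)) {..<length hs} (pinv (U (Suc h)) {..<length hs} (Kmat f hs))"

definition core_choices :: "nat \<Rightarrow> (nat \<Rightarrow> ('ob,'a) test set) \<Rightarrow> ('ob,'a) model \<Rightarrow> nat \<Rightarrow> ('ob,'a) hist list set" where
  "core_choices H U f h = {hs. set hs \<subseteq> hists h \<and> length hs = d_PSR H f h \<and>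
      (\<forall>\<tau>\<in>hists h. \<exists>c. \<forall>u\<in>U (Suc h). test_prob f \<tau> u = (\<Sum>j<length hs. c j * test_prob f (hs ! j) u))}"

text \<open>Columns of K_{h;f}: the choice minimising ||K^dagger||_{1->1}; K_{0;f} = q_{0;f} (column of the empty history).\<close>
definition K_cols :: "nat \<Rightarrow> (nat \<Rightarrow> ('ob,'a) test set) \<Rightarrow> ('ob,'a) model \<Rightarrow> nat \<Rightarrow> ('ob,'a) hist list" where
  "K_cols H U f h = (if h = 0 then [[]] else arg_min (Kdag_norm U f h) (\<lambda>hs. hs \<in> core_choices H U f h))"

definition in_colspace_K :: "nat \<Rightarrow> (nat \<Rightarrow> ('ob,'a) test set) \<Rightarrow> ('ob,'a) model \<Rightarrow> nat \<Rightarrow> (('ob,'a) test \<Rightarrow> real) \<Rightarrow> bool" where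
  "in_colspace_K H U f h x \<longleftrightarrow> (let hs = K_cols H U f h in
     \<exists>c. \<forall>u\<in>U (Suc h). x u = (\<Sum>j<length hs. c j * test_prob f (hs ! j) u))"

text \<open>Given chosen vectors m f h t = m_{t,h;f}: the map x |-> M_{ob,a,h;f} x (rows indexed by U_{h+1}).\<close>
definition M_app :: "(nat \<Rightarrow> ('ob,'a) test set) \<Rightarrow> (('ob,'a) model \<Rightarrow> nat \<Rightarrow> ('ob,'a) test \<Rightarrow> ('ob,'a) test \<Rightarrow> real)
     \<Rightarrow> ('ob,'a) model \<Rightarrow> nat \<Rightarrow> 'ob \<Rightarrow> 'a \<Rightarrow> (('ob,'a) test \<Rightarrow> real) \<Rightarrow> ('ob,'a) test \<Rightarrow> real" where
  "M_app U m f h ob a x = (\<lambda>u. inner_on (U h) (m f h (ext_test ob a u)) x)"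

text \<open>M_seq U m f l [(o_l,a_l),...,(o_h,a_h)] x = M_{o_h,a_h,h} ... M_{o_l,a_l,l} x.\<close>
fun M_seq :: "(nat \<Rightarrow> ('ob,'a) test set) \<Rightarrow> (('ob,'a) model \<Rightarrow> nat \<Rightarrow> ('ob,'a) test \<Rightarrow> ('ob,'a) test \<Rightarrow> real)
     \<Rightarrow> ('ob,'a) model \<Rightarrow> nat \<Rightarrow> ('ob,'a) hist \<Rightarrow> (('ob,'a) test \<Rightarrow> real) \<Rightarrow> ('ob,'a) test \<Rightarrow> real" where
  "M_seq U m f l [] x = x"
| "M_seq U m f l ((ob,a) # \<tau>) x = M_seq U m f (Suc l) \<tau> (M_app U m f l ob a x)"

definition q0 :: "('ob,'a) model \<Rightarrow> ('ob,'a) test \<Rightarrow> real" where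
  "q0 f = test_prob f []"

end

theory Submission
  imports Defs "HOL-Library.Function_Algebras"
begin

lemma finite_hists[simp]: "finite (hists n :: ('ob::finite,'a::finite) hist set)"
  unfolding hists_def using finite_lists_length_eq[of "UNIV::('ob\<times>'a) set" n] by simp

lemma sum_UNIV_pair: "(\<Sum>p\<in>(UNIV::('x::finite\<times>'y::finite) set). g p) = (\<Sum>x\<in>UNIV. \<Sum>y\<in>UNIV. g (x,y))"
  by (simp add: sum.cartesian_product UNIV_Times_UNIV[symmetric] del: UNIV_Times_UNIV)

lemma hists_Suc_sum:
  "(\<Sum>\<tau>\<in>hists (Suc n). g \<tau>) = (\<Sum>p\<in>(UNIV::('ob::finite\<times>'a::finite) set). \<Sum>\<tau>\<in>hists n. g (p # \<tau>))"
proof -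
  have e: "hists (Suc n) = (\<lambda>(p,\<tau>). p # \<tau>) ` (UNIV \<times> hists n)"
    by (auto simp: hists_def length_Suc_conv image_iff)
  have i: "inj_on (\<lambda>(p,\<tau>). p # \<tau>) (UNIV \<times> (hists n :: ('ob,'a) hist set))" by (auto simp: inj_on_def)
  show ?thesis unfolding e sum.reindex[OF i] by (simp add: sum.cartesian_product split_def)
qed

lemma hists_0[simp]: "hists 0 = {[]}" by (auto simp: hists_def)

lemma hists_append_sum:
  "(\<Sum>\<tau>\<in>hists (l + n). g \<tau>) = (\<Sum>\<tau>0\<in>hists l. \<Sum>\<tau>'\<in>hists n. g (\<tau>0 @ \<tau>' :: ('ob::finite,'a::finite) hist))"
proof (induction l arbitrary: g)
  case 0
  then show ?case by simp
next
  case (Suc l)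
  have "(\<Sum>\<tau>\<in>hists (Suc l + n). g \<tau>) = (\<Sum>p\<in>UNIV. \<Sum>\<tau>\<in>hists (l + n). g (p # \<tau>))"
    using hists_Suc_sum[where n="l+n" and g=g] by simp
  also have "\<dots> = (\<Sum>p\<in>UNIV. \<Sum>\<tau>0\<in>hists l. \<Sum>\<tau>'\<in>hists n. g (p # \<tau>0 @ \<tau>'))"
    using Suc.IH by simp
  also have "\<dots> = (\<Sum>\<tau>0\<in>hists (Suc l). \<Sum>\<tau>'\<in>hists n. g (\<tau>0 @ \<tau>'))"
    using hists_Suc_sum[where n=l and g="\<lambda>\<tau>0. \<Sum>\<tau>'\<in>hists n. g (\<tau>0 @ \<tau>')"] by simp
  finally show ?case .
qed

fun ocond :: "('ob,'a) model \<Rightarrow> ('ob,'a) hist \<Rightarrow> ('ob,'a) hist \<Rightarrow> real" where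
  "ocond f \<sigma> [] = 1"
| "ocond f \<sigma> ((ob,a) # \<tau>) = f \<sigma> ob * ocond f (\<sigma> @ [(ob,a)]) \<tau>"

fun pcond :: "('ob,'a) policy \<Rightarrow> ('ob,'a) hist \<Rightarrow> ('ob,'a) hist \<Rightarrow> real" where
  "pcond \<pi> \<sigma> [] = 1"
| "pcond \<pi> \<sigma> ((ob,a) # \<tau>) = \<pi> \<sigma> ob a * pcond \<pi> (\<sigma> @ [(ob,a)]) \<tau>"

lemma pol_prob_Nil[simp]: "pol_prob \<pi> [] = 1" by (simp add: pol_prob_def)

lemma pol_prob_snoc: "pol_prob \<pi> (\<sigma> @ [(ob,a)]) = pol_prob \<pi> \<sigma> * \<pi> \<sigma> ob a"
proof -
  have "(\<Prod>i<length \<sigma>. \<pi> (take i (\<sigma> @ [(ob,a)])) (fst ((\<sigma> @ [(ob,a)]) ! i)) (snd ((\<sigma> @ [(ob,a)]) ! i)))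
      = (\<Prod>i<length \<sigma>. \<pi> (take i \<sigma>) (fst (\<sigma> ! i)) (snd (\<sigma> ! i)))"
    by (rule prod.cong) (auto simp: nth_append)
  then show ?thesis by (simp add: pol_prob_def prod.lessThan_Suc nth_append)
qed

lemma obs_prob_snoc: "obs_prob f (\<sigma> @ [(ob,a)]) = obs_prob f \<sigma> * f \<sigma> ob"
proof -
  have "(\<Prod>i<length \<sigma>. f (take i (\<sigma> @ [(ob,a)])) (fst ((\<sigma> @ [(ob,a)]) ! i)))
      = (\<Prod>i<length \<sigma>. f (take i \<sigma>) (fst (\<sigma> ! i)))"
    by (rule prod.cong) (auto simp: nth_append)
  then show ?thesis by (simp add: obs_prob_def prod.lessThan_Suc nth_append)
qed

lemma pol_prob_append: "pol_prob \<pi> (\<sigma> @ \<tau>) = pol_prob \<pi> \<sigma> * pcond \<pi> \<sigma> \<tau>"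
proof (induction \<tau> arbitrary: \<sigma>)
  case Nil
  then show ?case by simp
next
  case (Cons p \<tau>)
  obtain ob a where p: "p = (ob,a)" by (cases p)
  have "pol_prob \<pi> (\<sigma> @ p # \<tau>) = pol_prob \<pi> ((\<sigma> @ [(ob,a)]) @ \<tau>)" by (simp add: p)
  also have "\<dots> = pol_prob \<pi> (\<sigma> @ [(ob,a)]) * pcond \<pi> (\<sigma> @ [(ob,a)]) \<tau>"
    by (rule Cons.IH)
  also have "\<dots> = pol_prob \<pi> \<sigma> * \<pi> \<sigma> ob a * pcond \<pi> (\<sigma> @ [(ob,a)]) \<tau>"
    by (simp add: pol_prob_snoc)
  finally show ?case by (simp add: p)
qed

lemma test_prob_ext:
  assumes "f \<sigma> ob \<ge> 0"
  shows "test_prob f \<sigma> (ext_test ob a u) = f \<sigma> ob * test_prob f (\<sigma> @ [(ob,a)]) u"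
proof -
  obtain ts ol where u: "u = (ts, ol)" by (cases u)
  have P: "(\<Prod>i<length ((ob,a) # ts). f (\<sigma> @ take i ((ob,a) # ts)) (fst (((ob,a) # ts) ! i)))
      = f \<sigma> ob * (\<Prod>i<length ts. f ((\<sigma> @ [(ob,a)]) @ take i ts) (fst (ts ! i)))"
    by (simp add: prod.lessThan_Suc_shift del: prod.lessThan_Suc)
  show ?thesis
  proof (cases "obs_prob f \<sigma> > 0")
    case True
    show ?thesis
    proof (cases "f \<sigma> ob > 0")
      case True
      with \<open>obs_prob f \<sigma> > 0\<close> have "obs_prob f (\<sigma> @ [(ob,a)]) > 0" by (simp add: obs_prob_snoc)
      then show ?thesis using \<open>obs_prob f \<sigma> > 0\<close> P by (simp add: test_prob_def ext_test_def u)
    next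
      case False
      then have "f \<sigma> ob = 0" using assms by simp
      then show ?thesis using \<open>obs_prob f \<sigma> > 0\<close> P by (simp add: test_prob_def ext_test_def u)
    qed
  next
    case False
    then have "\<not> obs_prob f (\<sigma> @ [(ob,a)]) > 0" using assms
      by (simp add: obs_prob_snoc mult_nonpos_nonneg not_less)
    then show ?thesis using False by (simp add: test_prob_def ext_test_def u)
  qed
qed


lemma M_app_diff: "M_app U m f l ob a (\<lambda>v. x v - y v) = (\<lambda>v. M_app U m f l ob a x v - M_app U m f l ob a y v)"
  by (auto simp: M_app_def inner_on_def algebra_simps sum_subtractf)

lemma M_app_add: "M_app U m f l ob a (\<lambda>v. x v + y v) = (\<lambda>v. M_app U m f l ob a x v + M_app U m f l ob a y v)"
  by (auto simp: M_app_def inner_on_def algebra_simps sum.distrib)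

lemma M_app_sum: "M_app U m f l ob a (\<lambda>v. \<Sum>j\<in>J. c j * x j v) = (\<lambda>v. \<Sum>j\<in>J. c j * M_app U m f l ob a (x j) v)"
  by (auto simp: M_app_def inner_on_def sum_distrib_left sum.swap[of _ J] mult.left_commute)

lemma M_seq_diff: "M_seq U m f l \<tau> (\<lambda>v. x v - y v) u = M_seq U m f l \<tau> x u - M_seq U m f l \<tau> y u"
  by (induction \<tau> arbitrary: l x y) (auto simp: M_app_diff)

lemma M_seq_add: "M_seq U m f l \<tau> (\<lambda>v. x v + y v) u = M_seq U m f l \<tau> x u + M_seq U m f l \<tau> y u"
  by (induction \<tau> arbitrary: l x y) (auto simp: M_app_add)

lemma M_seq_sum: "M_seq U m f l \<tau> (\<lambda>v. \<Sum>j\<in>J. c j * x j v) u = (\<Sum>j\<in>J. c j * M_seq U m f l \<tau> (x j) u)"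
  by (induction \<tau> arbitrary: l x) (auto simp: M_app_sum)

lemma M_seq_cong:
  assumes "\<forall>v\<in>U l. x v = y v" and "u \<in> U (l + length \<tau>)"
  shows "M_seq U m f l \<tau> x u = M_seq U m f l \<tau> y u"
proof (cases \<tau>)
  case Nil
  then show ?thesis using assms by simp
next
  case (Cons p \<tau>')
  obtain ob a where p: "p = (ob,a)" by (cases p)
  have "M_app U m f l ob a x = M_app U m f l ob a y"
    using assms(1) by (auto simp: M_app_def inner_on_def intro!: sum.cong)
  then show ?thesis by (simp add: Cons p)
qed

lemma telescope:
  "M_seq U m g s \<tau> x u - M_seq U m f s \<tau> y u =
   M_seq U m g s \<tau> (\<lambda>v. x v - y v) u +
   (\<Sum>i<length \<tau>. M_seq U m g (Suc (s+i)) (drop (Suc i) \<tau>)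
      (\<lambda>v. M_app U m g (s+i) (fst (\<tau>!i)) (snd (\<tau>!i)) (M_seq U m f s (take i \<tau>) y) v
         - M_app U m f (s+i) (fst (\<tau>!i)) (snd (\<tau>!i)) (M_seq U m f s (take i \<tau>) y) v) u)"
proof (induction \<tau> arbitrary: s x y)
  case Nil
  then show ?case by (simp add: M_seq_diff)
next
  case (Cons p \<tau>)
  obtain ob a where p: "p = (ob,a)" by (cases p)
  let ?Mg = "M_app U m g s ob a" and ?Mf = "M_app U m f s ob a"
  have "M_seq U m g s (p # \<tau>) x u - M_seq U m f s (p # \<tau>) y u
     = M_seq U m g (Suc s) \<tau> (?Mg x) u - M_seq U m f (Suc s) \<tau> (?Mf y) u" by (simp add: p)
  also have "\<dots> = M_seq U m g (Suc s) \<tau> (\<lambda>v. ?Mg x v - ?Mf y v) u +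
   (\<Sum>i<length \<tau>. M_seq U m g (Suc (Suc s+i)) (drop (Suc i) \<tau>)
      (\<lambda>v. M_app U m g (Suc s+i) (fst (\<tau>!i)) (snd (\<tau>!i)) (M_seq U m f (Suc s) (take i \<tau>) (?Mf y)) v
         - M_app U m f (Suc s+i) (fst (\<tau>!i)) (snd (\<tau>!i)) (M_seq U m f (Suc s) (take i \<tau>) (?Mf y)) v) u)"
    by (rule Cons.IH)
  also have "(\<lambda>v. ?Mg x v - ?Mf y v) = (\<lambda>v. ?Mg (\<lambda>w. x w - y w) v + (?Mg y v - ?Mf y v))"
    by (simp add: M_app_diff)
  also have "M_seq U m g (Suc s) \<tau> \<dots> u = M_seq U m g (Suc s) \<tau> (?Mg (\<lambda>w. x w - y w)) u
       + M_seq U m g (Suc s) \<tau> (\<lambda>v. ?Mg y v - ?Mf y v) u"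
    by (rule M_seq_add)
  finally show ?case
    by (simp add: p sum.lessThan_Suc_shift del: sum.lessThan_Suc)
qed

lemma norm1_add: "norm1_on U (\<lambda>u. x u + y u) \<le> norm1_on U x + norm1_on U y"
  unfolding norm1_on_def by (simp add: sum.distrib[symmetric] sum_mono abs_triangle_ineq)

lemma norm1_sum: "norm1_on U (\<lambda>u. \<Sum>i\<in>I. x i u) \<le> (\<Sum>i\<in>I. norm1_on U (x i))"
proof -
  have "norm1_on U (\<lambda>u. \<Sum>i\<in>I. x i u) \<le> (\<Sum>u\<in>U. \<Sum>i\<in>I. \<bar>x i u\<bar>)"
    unfolding norm1_on_def by (intro sum_mono sum_abs)
  also have "\<dots> = (\<Sum>i\<in>I. norm1_on U (x i))" unfolding norm1_on_def by (rule sum.swap)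
  finally show ?thesis .
qed

lemma norm1_nonneg: "norm1_on U x \<ge> 0" unfolding norm1_on_def by (simp add: sum_nonneg)

lemma opnorm_bound:
  assumes fI: "finite I" and fJ: "finite J"
  shows "(\<Sum>j\<in>J. \<bar>\<Sum>i\<in>I. X j i * y i\<bar>) \<le> opnorm11 I J X * (\<Sum>i\<in>I. \<bar>y i\<bar>)"
proof -
  let ?S = "{(\<Sum>j\<in>J. \<bar>\<Sum>i\<in>I. X j i * x i\<bar>) | x. (\<Sum>i\<in>I. \<bar>x i\<bar>) \<le> 1}"
  have bdd: "bdd_above ?S"
  proof (rule bdd_aboveI)
    fix s assume "s \<in> ?S"
    then obtain x where s: "s = (\<Sum>j\<in>J. \<bar>\<Sum>i\<in>I. X j i * x i\<bar>)" and x: "(\<Sum>i\<in>I. \<bar>x i\<bar>) \<le> 1" by auto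
    have xi: "\<bar>x i\<bar> \<le> 1" if "i \<in> I" for i
      using member_le_sum[of i I "\<lambda>i. \<bar>x i\<bar>"] that fI x by auto
    have "\<bar>\<Sum>i\<in>I. X j i * x i\<bar> \<le> (\<Sum>i\<in>I. \<bar>X j i\<bar>)" for j
    proof -
      have "\<bar>\<Sum>i\<in>I. X j i * x i\<bar> \<le> (\<Sum>i\<in>I. \<bar>X j i * x i\<bar>)" by (rule sum_abs)
      also have "\<dots> \<le> (\<Sum>i\<in>I. \<bar>X j i\<bar>)"
        by (intro sum_mono) (auto simp: abs_mult intro: mult_left_le xi)
      finally show ?thesis .
    qed
    then show "s \<le> (\<Sum>j\<in>J. \<Sum>i\<in>I. \<bar>X j i\<bar>)" unfolding s by (intro sum_mono)
  qed
  let ?n = "\<Sum>i\<in>I. \<bar>y i\<bar>"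
  show ?thesis
  proof (cases "?n = 0")
    case True
    then have "\<forall>i\<in>I. y i = 0" using fI by (simp add: sum_nonneg_eq_0_iff)
    then show ?thesis using True by simp
  next
    case False
    then have npos: "?n > 0" by (simp add: sum_nonneg order_le_neq_trans)
    let ?x = "\<lambda>i. y i / ?n"
    have "(\<Sum>i\<in>I. \<bar>?x i\<bar>) = 1" using npos by (simp add: sum_divide_distrib[symmetric])
    then have "(\<Sum>j\<in>J. \<bar>\<Sum>i\<in>I. X j i * ?x i\<bar>) \<in> ?S"
      by (intro CollectI exI[of _ ?x]) simp
    then have le: "(\<Sum>j\<in>J. \<bar>\<Sum>i\<in>I. X j i * ?x i\<bar>) \<le> opnorm11 I J X"
      unfolding opnorm11_def using bdd by (rule cSup_upper)
    have "(\<Sum>j\<in>J. \<bar>\<Sum>i\<in>I. X j i * ?x i\<bar>) = (\<Sum>j\<in>J. \<bar>\<Sum>i\<in>I. X j i * y i\<bar>) / ?n"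
      using npos by (simp add: sum_divide_distrib[symmetric] times_divide_eq_right)
    with le npos show ?thesis by (simp add: divide_le_eq mult.commute)
  qed
qed


lemma TA_finite: "finite {t :: ('ob::finite,'a::finite) test. test_actions t = A}"
proof -
  have "{t :: ('ob,'a) test. test_actions t = A} \<subseteq> {xs. set xs \<subseteq> UNIV \<and> length xs = length A} \<times> UNIV"
    by (auto simp: test_actions_def dest: arg_cong[where f=length])
  moreover have "finite ({xs :: ('ob \<times> 'a) list. set xs \<subseteq> UNIV \<and> length xs = length A} \<times> (UNIV :: 'ob set))"
    by (intro finite_cartesian_product finite_lists_length_eq) auto
  ultimately show ?thesis by (rule finite_subset)
qed

lemma test_mass:
  assumes valid: "valid_model H f" and len: "length \<rho> + length A < H"
  shows "(\<Sum>t\<in>{t :: ('ob::finite,'a::finite) test. test_actions t = A}. test_prob f \<rho> t) = (if obs_prob f \<rho> > 0 then 1 else 0)"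
  using len
proof (induction A arbitrary: \<rho>)
  case Nil
  have e: "{t :: ('ob,'a) test. test_actions t = []} = (\<lambda>ol. ([], ol)) ` UNIV"
    by (auto simp: test_actions_def image_iff)
  have i: "inj (\<lambda>ol::'ob. ([] :: ('ob \<times> 'a) list, ol))" by (auto simp: inj_on_def)
  have s1: "(\<Sum>ol\<in>UNIV. f \<rho> ol) = 1" using valid Nil by (simp add: valid_model_def)
  show ?case unfolding e sum.reindex[OF i] by (simp add: test_prob_def s1)
next
  case (Cons a A)
  let ?g = "\<lambda>(ob, t). ((ob,a) # fst t, snd t) :: ('ob,'a) test"
  have e: "{t :: ('ob,'a) test. test_actions t = a # A} = ?g ` (UNIV \<times> {t. test_actions t = A})"
  proof (rule set_eqI, rule iffI)
    fix t :: "('ob,'a) test" assume "t \<in> {t. test_actions t = a # A}"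
    then obtain p ps where "fst t = p # ps" "snd p = a" "map snd ps = A"
      by (auto simp: test_actions_def map_eq_Cons_conv)
    then show "t \<in> ?g ` (UNIV \<times> {t. test_actions t = A})"
      by (intro image_eqI[of _ _ "(fst p, (ps, snd t))"]) (auto simp: test_actions_def prod_eq_iff)
  qed (auto simp: test_actions_def)
  have i: "inj_on ?g (UNIV \<times> {t. test_actions t = A})" by (auto simp: inj_on_def prod_eq_iff)
  have fnn: "\<And>ob. f \<rho> ob \<ge> 0" using valid Cons.prems by (simp add: valid_model_def)
  have "(\<Sum>t\<in>{t. test_actions t = a # A}. test_prob f \<rho> t)
      = (\<Sum>ob\<in>UNIV. \<Sum>t\<in>{t. test_actions t = A}. test_prob f \<rho> (ext_test ob a t))"
    unfolding e sum.reindex[OF i] by (simp add: sum.cartesian_product split_def ext_test_def)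
  also have "\<dots> = (\<Sum>ob\<in>UNIV. f \<rho> ob * (\<Sum>t\<in>{t. test_actions t = A}. test_prob f (\<rho> @ [(ob,a)]) t))"
    by (simp add: test_prob_ext[where f=f and \<sigma>=\<rho>, OF fnn] sum_distrib_left)
  also have "\<dots> = (\<Sum>ob\<in>UNIV. f \<rho> ob * (if obs_prob f (\<rho> @ [(ob,a)]) > 0 then 1 else 0))"
    using Cons.IH[of "\<rho> @ [(ob,a)]" for ob] Cons.prems by simp
  also have "\<dots> = (if obs_prob f \<rho> > 0 then 1 else 0)"
  proof (cases "obs_prob f \<rho> > 0")
    case True
    have "f \<rho> ob * (if obs_prob f (\<rho> @ [(ob,a)]) > 0 then 1 else 0) = f \<rho> ob" for ob
      using True fnn[of ob] by (auto simp: obs_prob_snoc zero_less_mult_iff)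
    then have "(\<Sum>ob\<in>UNIV. f \<rho> ob * (if obs_prob f (\<rho> @ [(ob,a)]) > 0 then 1 else 0)) = (\<Sum>ob\<in>UNIV. f \<rho> ob)"
      by (intro sum.cong) auto
    then show ?thesis using True valid Cons.prems by (simp add: valid_model_def)
  next
    case False
    have "\<not> obs_prob f (\<rho> @ [(ob,a)]) > 0" for ob
      using False fnn[of ob] by (simp add: obs_prob_snoc mult_nonpos_nonneg not_less)
    then show ?thesis using False by simp
  qed
  finally show ?case .
qed

lemma test_prob_nonneg:
  assumes valid: "valid_model H f" and len: "length \<rho> + length (fst t) < H"
  shows "test_prob f \<rho> t \<ge> 0"
proof -
  have "\<forall>i<length (fst t). f (\<rho> @ take i (fst t)) (fst (fst t ! i)) \<ge> 0"
    using valid len by (auto simp: valid_model_def)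
  moreover have "f (\<rho> @ fst t) (snd t) \<ge> 0" using valid len by (auto simp: valid_model_def)
  ultimately show ?thesis unfolding test_prob_def by (auto intro!: prod_nonneg mult_nonneg_nonneg)
qed

lemma mass_U:
  assumes valid: "valid_model H f" and fU: "finite U'" and sub: "U' \<subseteq> tests_at H (Suc k)"
    and len: "length \<rho> = k"
  shows "(\<Sum>u\<in>U'. test_prob f \<rho> u) \<le> card (test_actions ` U')"
proof -
  have "(\<Sum>u\<in>U'. test_prob f \<rho> u) = (\<Sum>A\<in>test_actions ` U'. \<Sum>u\<in>{x\<in>U'. test_actions x = A}. test_prob f \<rho> u)"
    by (rule sum.image_gen[OF fU])
  also have "\<dots> \<le> (\<Sum>A\<in>test_actions ` U'. (1::real))"
  proof (rule sum_mono)
    fix A assume "A \<in> test_actions ` U'"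
    then obtain u where u: "u \<in> U'" "A = test_actions u" by auto
    have lA: "length \<rho> + length A < H" using sub u len by (auto simp: tests_at_def test_actions_def)
    have "(\<Sum>u\<in>{x\<in>U'. test_actions x = A}. test_prob f \<rho> u) \<le> (\<Sum>t\<in>{t. test_actions t = A}. test_prob f \<rho> t)"
    proof (rule sum_mono2[OF TA_finite])
      fix t assume "t \<in> {t. test_actions t = A} - {x\<in>U'. test_actions x = A}"
      then have "length (fst t) = length A" by (auto simp: test_actions_def)
      then show "0 \<le> test_prob f \<rho> t" using test_prob_nonneg[OF valid] lA by simp
    qed auto
    also have "\<dots> \<le> 1" using test_mass[OF valid lA] by simp
    finally show "(\<Sum>u\<in>{x\<in>U'. test_actions x = A}. test_prob f \<rho> u) \<le> 1" .
  qed
  finally show ?thesis by simp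
qed

lemma pcond_nonneg: "valid_policy H \<pi> \<Longrightarrow> length \<sigma> + length \<tau> \<le> H \<Longrightarrow> pcond \<pi> \<sigma> \<tau> \<ge> 0"
proof (induction \<tau> arbitrary: \<sigma>)
  case (Cons p \<tau>)
  obtain ob a where p: "p = (ob,a)" by (cases p)
  have "\<pi> \<sigma> ob a \<ge> 0" using Cons.prems by (auto simp: valid_policy_def)
  moreover have "pcond \<pi> (\<sigma> @ [(ob,a)]) \<tau> \<ge> 0" using Cons by simp
  ultimately show ?case by (simp add: p)
qed simp

lemma ocond_nonneg: "valid_model H f \<Longrightarrow> length \<sigma> + length \<tau> \<le> H \<Longrightarrow> ocond f \<sigma> \<tau> \<ge> 0"
proof (induction \<tau> arbitrary: \<sigma>)
  case (Cons p \<tau>)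
  obtain ob a where p: "p = (ob,a)" by (cases p)
  have "f \<sigma> ob \<ge> 0" using Cons.prems by (auto simp: valid_model_def)
  moreover have "ocond f (\<sigma> @ [(ob,a)]) \<tau> \<ge> 0" using Cons by simp
  ultimately show ?case by (simp add: p)
qed simp

lemma pol_prob_nonneg: "valid_policy H \<pi> \<Longrightarrow> length \<tau> \<le> H \<Longrightarrow> pol_prob \<pi> \<tau> \<ge> 0"
  using pcond_nonneg[of H \<pi> "[]" \<tau>] pol_prob_append[of \<pi> "[]" \<tau>] by simp

lemma pcond_ocond_sum:
  assumes vp: "valid_policy H \<pi>" and vf: "valid_model H f"
  shows "length \<tau>0 + n \<le> H \<Longrightarrow> length \<sigma> + n \<le> H \<Longrightarrow>
    (\<Sum>\<tau>\<in>hists n. pcond \<pi> \<tau>0 \<tau> * ocond f \<sigma> (\<tau> :: ('ob::finite,'a::finite) hist)) \<le> 1"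
proof (induction n arbitrary: \<tau>0 \<sigma>)
  case 0
  then show ?case by simp
next
  case (Suc n)
  have "(\<Sum>\<tau>\<in>hists (Suc n). pcond \<pi> \<tau>0 \<tau> * ocond f \<sigma> \<tau>)
     = (\<Sum>ob\<in>UNIV. \<Sum>a\<in>UNIV. \<pi> \<tau>0 ob a * f \<sigma> ob *
          (\<Sum>\<tau>\<in>hists n. pcond \<pi> (\<tau>0 @ [(ob,a)]) \<tau> * ocond f (\<sigma> @ [(ob,a)]) \<tau>))"
    by (simp add: hists_Suc_sum sum_UNIV_pair sum_distrib_left mult_ac)
  also have "\<dots> \<le> (\<Sum>ob\<in>UNIV. \<Sum>a\<in>UNIV. \<pi> \<tau>0 ob a * f \<sigma> ob * 1)"
  proof (intro sum_mono mult_left_mono)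
    fix ob a
    show "(\<Sum>\<tau>\<in>hists n. pcond \<pi> (\<tau>0 @ [(ob,a)]) \<tau> * ocond f (\<sigma> @ [(ob,a)]) \<tau>) \<le> 1"
      using Suc by simp
    show "0 \<le> \<pi> \<tau>0 ob a * f \<sigma> ob" using Suc.prems vp vf
      by (auto simp: valid_policy_def valid_model_def intro!: mult_nonneg_nonneg)
  qed
  also have "\<dots> = (\<Sum>ob\<in>UNIV. f \<sigma> ob * (\<Sum>a\<in>UNIV. \<pi> \<tau>0 ob a))"
    by (simp add: sum_distrib_left mult_ac)
  also have "\<dots> = 1" using Suc.prems vp vf by (simp add: valid_policy_def valid_model_def)
  finally show ?case .
qed

lemma mass_bound:
  assumes vp: "valid_policy H \<pi>" and vf: "valid_model H f"
    and l0: "length \<tau>0 = l" and ls: "length \<sigma> = l" and lt: "l + n < H"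
    and fU: "finite U'" and sub: "U' \<subseteq> tests_at H (Suc (l + n))"
  shows "(\<Sum>\<tau>\<in>hists n. pcond \<pi> \<tau>0 \<tau> * (ocond f \<sigma> \<tau> * norm1_on U' (test_prob f (\<sigma> @ \<tau>))))
     \<le> card (test_actions ` U')"
proof -
  let ?N = "real (card (test_actions ` U'))"
  have "(\<Sum>\<tau>\<in>hists n. pcond \<pi> \<tau>0 \<tau> * (ocond f \<sigma> \<tau> * norm1_on U' (test_prob f (\<sigma> @ \<tau>))))
     \<le> (\<Sum>\<tau>\<in>hists n. pcond \<pi> \<tau>0 \<tau> * ocond f \<sigma> (\<tau> :: ('a,'b) hist) * ?N)"
  proof (rule sum_mono)
    fix \<tau> :: "('a,'b) hist" assume t: "\<tau> \<in> hists n"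
    then have lt': "length (\<sigma> @ \<tau>) = l + n" using ls by (simp add: hists_def)
    have "norm1_on U' (test_prob f (\<sigma> @ \<tau>)) = (\<Sum>u\<in>U'. test_prob f (\<sigma> @ \<tau>) u)"
      unfolding norm1_on_def
    proof (rule sum.cong)
      fix u assume "u \<in> U'"
      then have "length (\<sigma> @ \<tau>) + length (fst u) < H" using sub lt' by (auto simp: tests_at_def)
      then show "\<bar>test_prob f (\<sigma> @ \<tau>) u\<bar> = test_prob f (\<sigma> @ \<tau>) u"
        using test_prob_nonneg[OF vf] by simp
    qed simp
    also have "\<dots> \<le> ?N" by (rule mass_U[OF vf fU sub lt'])
    finally have "norm1_on U' (test_prob f (\<sigma> @ \<tau>)) \<le> ?N" .
    moreover have "pcond \<pi> \<tau>0 \<tau> \<ge> 0" "ocond f \<sigma> \<tau> \<ge> 0"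
      using pcond_nonneg[OF vp] ocond_nonneg[OF vf] t l0 ls lt by (auto simp: hists_def)
    ultimately show "pcond \<pi> \<tau>0 \<tau> * (ocond f \<sigma> \<tau> * norm1_on U' (test_prob f (\<sigma> @ \<tau>)))
       \<le> pcond \<pi> \<tau>0 \<tau> * ocond f \<sigma> \<tau> * ?N"
      by (simp add: mult.assoc mult_left_mono)
  qed
  also have "\<dots> = (\<Sum>\<tau>\<in>hists n. pcond \<pi> \<tau>0 \<tau> * ocond f \<sigma> \<tau>) * ?N" by (simp add: sum_distrib_right)
  also have "\<dots> \<le> 1 * ?N"
    using pcond_ocond_sum[OF vp vf] l0 ls lt by (intro mult_right_mono) auto
  finally show ?thesis by simp
qed


lemma sum_fun_apply: "(\<Sum>v\<in>t. g v) x = (\<Sum>v\<in>t. g v x)"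
  by (induction t rule: infinite_finite_induct) auto

lemma list_indep_bound:
  fixes w :: "nat \<Rightarrow> 'x \<Rightarrow> real" and e :: "'k \<Rightarrow> 'x \<Rightarrow> real"
  assumes fK: "finite Ks"
    and indep: "\<And>c. (\<And>x. (\<Sum>j<n. c j * w j x) = 0) \<Longrightarrow> \<forall>j<n. c j = 0"
    and sp: "\<And>j. j < n \<Longrightarrow> \<exists>b. w j = (\<lambda>x. \<Sum>k\<in>Ks. b k * e k x)"
  shows "n \<le> card Ks"
proof -
  interpret fvs: vector_space "\<lambda>(c::real) (f::'x \<Rightarrow> real) x. c * f x"
    by unfold_locales (auto simp: algebra_simps)
  have inj: "inj_on w {..<n}"
  proof (rule inj_onI, rule ccontr)
    fix j k assume j: "j \<in> {..<n}" and k: "k \<in> {..<n}" and eq: "w j = w k" and ne: "j \<noteq> k"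
    let ?c = "\<lambda>i. (if i = j then 1 else 0) + (if i = k then -1 else 0) :: real"
    have "(\<Sum>i<n. ?c i * w i x) = 0" for x
    proof -
      have "(\<Sum>i<n. ?c i * w i x) = (\<Sum>i<n. (if i = j then w j x else 0) + (if i = k then - w k x else 0))"
        by (rule sum.cong) auto
      also have "\<dots> = (\<Sum>i<n. (if i = j then w j x else 0)) + (\<Sum>i<n. (if i = k then - w k x else 0))"
        by (rule sum.distrib)
      also have "\<dots> = 0" using j k eq by simp
      finally show ?thesis .
    qed
    then have "\<forall>i<n. ?c i = 0" by (rule indep)
    then show False using j ne by auto
  qed
  have indW: "fvs.independent (w ` {..<n})"
    unfolding fvs.independent_explicit_module
  proof (intro allI impI)
    fix t u v assume ft: "finite t" and tW: "t \<subseteq> w ` {..<n}"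
      and s0: "(\<Sum>v\<in>t. (\<lambda>x. u v * v x)) = 0" and vt: "v \<in> t"
    let ?S = "{i. i < n \<and> w i \<in> t}"
    let ?c = "\<lambda>i. if i < n \<and> w i \<in> t then u (w i) else 0"
    have wS: "w ` ?S = t" using tW by auto
    have injS: "inj_on w ?S" using inj by (rule inj_on_subset) auto
    have "(\<Sum>j<n. ?c j * w j x) = 0" for x
    proof -
      have "(\<Sum>j<n. ?c j * w j x) = (\<Sum>j\<in>?S. u (w j) * w j x)"
        by (rule sum.mono_neutral_cong_right) auto
      also have "\<dots> = (\<Sum>v\<in>t. u v * v x)"
        using sum.reindex[OF injS, of "\<lambda>v. u v * v x"] wS by simp
      also have "\<dots> = (\<Sum>v\<in>t. (\<lambda>x. u v * v x)) x" by (simp add: sum_fun_apply)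
      also have "\<dots> = 0" using s0 by simp
      finally show ?thesis .
    qed
    then have "\<forall>j<n. ?c j = 0" by (rule indep)
    moreover obtain i where "i < n" "v = w i" using vt tW by auto
    ultimately show "u v = 0" using vt by auto
  qed
  have "w ` {..<n} \<subseteq> fvs.span (e ` Ks)"
  proof
    fix v assume "v \<in> w ` {..<n}"
    then obtain j where j: "j < n" "v = w j" by auto
    obtain b where b: "w j = (\<lambda>x. \<Sum>k\<in>Ks. b k * e k x)" using sp j by auto
    have "v = (\<Sum>k\<in>Ks. (\<lambda>x. b k * e k x))" using j b by (auto simp: sum_fun_apply)
    also have "\<dots> \<in> fvs.span (e ` Ks)"
      by (intro fvs.span_sum fvs.span_scale fvs.span_base) auto
    finally show "v \<in> fvs.span (e ` Ks)" .
  qed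
  from fvs.independent_span_bound[OF finite_imageI[OF fK] indW this]
  have "card (w ` {..<n}) \<le> card (e ` Ks)" by simp
  also have "\<dots> \<le> card Ks" using fK by (rule card_image_le)
  finally show ?thesis using card_image[OF inj] by simp
qed


lemma penrose_G:
  assumes P: "penrose I J K Y" and j: "j \<in> J" and i0: "i0 \<in> I"
  shows "(\<Sum>j'\<in>J. (\<Sum>i\<in>I. K i j * K i j') * Y j' i0) = K i0 j"
proof -
  have c1: "(\<Sum>i'\<in>I. (\<Sum>j'\<in>J. K i0 j' * Y j' i') * K i' j) = K i0 j"
    using P j i0 unfolding penrose_def by blast
  have c3: "(\<Sum>j'\<in>J. K i0 j' * Y j' i') = (\<Sum>j'\<in>J. K i' j' * Y j' i0)" if "i' \<in> I" for i'
    using P i0 that unfolding penrose_def by blast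
  have "K i0 j = (\<Sum>i'\<in>I. (\<Sum>j'\<in>J. K i' j' * Y j' i0) * K i' j)"
    using c1[symmetric] by (simp only:) (rule sum.cong[OF refl], simp add: c3)
  also have "\<dots> = (\<Sum>i'\<in>I. \<Sum>j'\<in>J. K i' j * K i' j' * Y j' i0)"
    by (simp add: sum_distrib_left sum_distrib_right mult_ac)
  also have "\<dots> = (\<Sum>j'\<in>J. \<Sum>i'\<in>I. K i' j * K i' j' * Y j' i0)" by (rule sum.swap)
  also have "\<dots> = (\<Sum>j'\<in>J. (\<Sum>i\<in>I. K i j * K i j') * Y j' i0)"
    by (simp add: sum_distrib_right)
  finally show ?thesis by simp
qed

lemma penrose_proj:
  assumes P: "penrose I J K Y" and j: "j \<in> J"
  shows "(\<Sum>i\<in>I. K i j * y i) = (\<Sum>i\<in>I. K i j * (\<Sum>j'\<in>J. (\<Sum>i'\<in>I. Y j' i' * y i') * K i j'))"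
proof -
  have "(\<Sum>i\<in>I. K i j * (\<Sum>j'\<in>J. (\<Sum>i'\<in>I. Y j' i' * y i') * K i j'))
      = (\<Sum>i\<in>I. \<Sum>j'\<in>J. \<Sum>i'\<in>I. K i j * K i j' * Y j' i' * y i')"
    by (simp add: sum_distrib_left sum_distrib_right mult_ac)
  also have "\<dots> = (\<Sum>j'\<in>J. \<Sum>i\<in>I. \<Sum>i'\<in>I. K i j * K i j' * Y j' i' * y i')" by (rule sum.swap)
  also have "\<dots> = (\<Sum>j'\<in>J. \<Sum>i'\<in>I. \<Sum>i\<in>I. K i j * K i j' * Y j' i' * y i')" by (rule sum.cong[OF refl], rule sum.swap)
  also have "\<dots> = (\<Sum>i'\<in>I. \<Sum>j'\<in>J. \<Sum>i\<in>I. K i j * K i j' * Y j' i' * y i')" by (rule sum.swap)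
  also have "\<dots> = (\<Sum>i'\<in>I. (\<Sum>j'\<in>J. (\<Sum>i\<in>I. K i j * K i j') * Y j' i') * y i')"
    by (simp add: sum_distrib_right)
  also have "\<dots> = (\<Sum>i'\<in>I. K i' j * y i')"
    using penrose_G[OF P j] by simp
  finally show ?thesis by simp
qed


lemma sum_delta_mult: "finite A \<Longrightarrow> (\<Sum>k\<in>A. g k * (if x = k then 1 else 0)) = (if x \<in> A then g x else (0::real))"
proof -
  assume "finite A"
  have "(\<lambda>k. g k * (if x = k then 1 else 0)) = (\<lambda>k. if x = k then g k else 0)" by auto
  then show ?thesis using \<open>finite A\<close> by (simp only:) (simp add: sum.delta)
qed

lemma sum_delta_mult': "finite A \<Longrightarrow> (\<Sum>k\<in>A. g k * (if k = x then 1 else 0)) = (if x \<in> A then g x else (0::real))"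
  using sum_delta_mult[of A g x] by (simp add: eq_commute)

lemma sum_delta_mult2: "finite A \<Longrightarrow> (\<Sum>k\<in>A. (if x = k then 1 else 0) * g k) = (if x \<in> A then g x else (0::real))"
  using sum_delta_mult[of A g x] by (simp add: mult.commute)

lemma gram_inj:
  fixes K :: "'r \<Rightarrow> nat \<Rightarrow> real"
  assumes fI: "finite I"
    and indep: "\<And>c. \<forall>i\<in>I. (\<Sum>j<d. c j * K i j) = 0 \<Longrightarrow> \<forall>j<d. c j = 0"
    and z: "\<forall>j<d. (\<Sum>j'<d. (\<Sum>i\<in>I. K i j * K i j') * z j') = 0"
  shows "\<forall>j<d. z j = 0"
proof -
  have "(\<Sum>j<d. z j * (\<Sum>j'<d. (\<Sum>i\<in>I. K i j * K i j') * z j')) = (\<Sum>j<d. \<Sum>j'<d. \<Sum>i\<in>I. K i j * z j * (K i j' * z j'))"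
    by (simp add: sum_distrib_left sum_distrib_right mult_ac)
  also have "\<dots> = (\<Sum>j<d. \<Sum>i\<in>I. \<Sum>j'<d. K i j * z j * (K i j' * z j'))"
    by (rule sum.cong[OF refl], rule sum.swap)
  also have "\<dots> = (\<Sum>i\<in>I. \<Sum>j<d. \<Sum>j'<d. K i j * z j * (K i j' * z j'))"
    by (rule sum.swap)
  also have "\<dots> = (\<Sum>i\<in>I. (\<Sum>j<d. z j * K i j)\<^sup>2)"
    by (simp add: power2_eq_square sum_distrib_left sum_distrib_right mult_ac)
  finally have "(\<Sum>i\<in>I. (\<Sum>j<d. z j * K i j)\<^sup>2) = 0" using z by simp
  then have "\<forall>i\<in>I. (\<Sum>j<d. z j * K i j)\<^sup>2 = 0"
    using fI by (subst (asm) sum_nonneg_eq_0_iff) auto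
  then have "\<forall>i\<in>I. (\<Sum>j<d. z j * K i j) = 0" by simp
  then show ?thesis by (rule indep)
qed

lemma gram_surj:
  fixes G :: "nat \<Rightarrow> nat \<Rightarrow> real"
  assumes Ginj: "\<And>z. \<forall>j<d. (\<Sum>j'<d. G j j' * z j') = 0 \<Longrightarrow> \<forall>j<d. z j = 0"
  shows "\<exists>z. \<forall>j<d. (\<Sum>j'<d. G j j' * z j') = b j"
proof (rule ccontr)
  assume nz: "\<not> ?thesis"
  define w where "w j = (\<lambda>k. if k < d then (if j < d then G k j else b k) else 0)" for j
  define e where "e k = (\<lambda>x::nat. if x = k then 1 else (0::real))" for k
  have "Suc d \<le> card {..<d}"
  proof (rule list_indep_bound[where w=w and e=e])
    fix j assume "j < Suc d"
    show "\<exists>c. w j = (\<lambda>x. \<Sum>k<d. c k * e k x)"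
      by (rule exI[of _ "\<lambda>k. w j k"]) (auto simp: e_def w_def fun_eq_iff sum_delta_mult)
  next
    fix c assume h: "\<And>x. (\<Sum>j<Suc d. c j * w j x) = 0"
    have hk: "(\<Sum>j<d. c j * G k j) + c d * b k = 0" if "k < d" for k
      using h[of k] that by (simp add: w_def)
    have cd: "c d = 0"
    proof (rule ccontr)
      assume cd0: "c d \<noteq> 0"
      have "\<forall>k<d. (\<Sum>j'<d. G k j' * (- c j' / c d)) = b k"
      proof (intro allI impI)
        fix k assume k: "k < d"
        have "(\<Sum>j'<d. G k j' * (- c j' / c d)) = (\<Sum>j'<d. c j' * G k j') * (- 1 / c d)"
          by (subst sum_distrib_right) (rule sum.cong, simp_all)
        also have "(\<Sum>j'<d. c j' * G k j') = - (c d * b k)" using hk[OF k] by simp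
        also have "- (c d * b k) * (- 1 / c d) = b k" using cd0 by simp
        finally show "(\<Sum>j'<d. G k j' * (- c j' / c d)) = b k" .
      qed
      then have "\<exists>z. \<forall>k<d. (\<Sum>j'<d. G k j' * z j') = b k" by (rule exI[of _ "\<lambda>j'. - c j' / c d"])
      with nz show False by simp
    qed
    have "\<forall>k<d. (\<Sum>j'<d. G k j' * c j') = 0" using hk cd by (simp add: mult.commute)
    then have "\<forall>j<d. c j = 0" by (rule Ginj)
    with cd show "\<forall>j<Suc d. c j = 0" using less_Suc_eq by auto
  qed simp
  then show False by simp
qed
lemma pinv_props:
  fixes K :: "'r \<Rightarrow> nat \<Rightarrow> real"
  assumes fI: "finite I"
    and indep: "\<And>c. \<forall>i\<in>I. (\<Sum>j<d. c j * K i j) = 0 \<Longrightarrow> \<forall>j<d. c j = 0"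
  shows "penrose I {..<d} K (pinv I {..<d} K)"
    and "\<And>j j'. j < d \<Longrightarrow> j' < d \<Longrightarrow> (\<Sum>i\<in>I. pinv I {..<d} K j i * K i j') = (if j = j' then 1 else 0)"
proof -
  define G where "G j j' = (\<Sum>i\<in>I. K i j * K i j')" for j j'
  have Gsym: "G j j' = G j' j" for j j' by (simp add: G_def mult.commute)
  have Ginj: "\<forall>j<d. z j = 0" if z: "\<forall>j<d. (\<Sum>j'<d. G j j' * z j') = 0" for z
    using gram_inj[OF fI indep, where z=z] z unfolding G_def by simp
  have Gsurj: "\<exists>z. \<forall>j<d. (\<Sum>j'<d. G j j' * z j') = b j" for b
    by (rule gram_surj) (rule Ginj, assumption)
  have "\<forall>i. \<exists>z. \<forall>j<d. (\<Sum>j'<d. G j j' * z j') = K i j" using Gsurj by blast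
  from choice[OF this] obtain Z where Z: "\<And>i. \<forall>j<d. (\<Sum>j'<d. G j j' * Z i j') = K i j"
    by blast
  define X0 where "X0 j i = (if j < d \<and> i \<in> I then Z i j else 0)" for j i
  have GX: "(\<Sum>j'<d. G j j' * X0 j' i) = K i j" if "j < d" "i \<in> I" for j i
    using Z[of i] that by (simp add: X0_def)
  have XK: "(\<Sum>i\<in>I. X0 j i * K i j0) = (if j = j0 then 1 else 0)" if j: "j < d" and j0: "j0 < d" for j j0
  proof -
    define v where "v j = (\<Sum>i\<in>I. X0 j i * K i j0) - (if j = j0 then 1 else 0)" for j
    have "\<forall>j<d. (\<Sum>j'<d. G j j' * v j') = 0"
    proof (intro allI impI)
      fix j assume j: "j < d"
      have "(\<Sum>j'<d. G j j' * v j') = (\<Sum>j'<d. G j j' * (\<Sum>i\<in>I. X0 j' i * K i j0)) - (\<Sum>j'<d. G j j' * (if j' = j0 then 1 else 0))"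
        unfolding v_def by (simp only: right_diff_distrib sum_subtractf)
      also have "(\<Sum>j'<d. G j j' * (if j' = j0 then 1 else 0)) = G j j0"
        using j0 by (simp add: sum_delta_mult')
      also have "(\<Sum>j'<d. G j j' * (\<Sum>i\<in>I. X0 j' i * K i j0)) = (\<Sum>j'<d. \<Sum>i\<in>I. G j j' * X0 j' i * K i j0)"
        by (simp add: sum_distrib_left mult_ac)
      also have "(\<Sum>j'<d. \<Sum>i\<in>I. G j j' * X0 j' i * K i j0) = (\<Sum>i\<in>I. \<Sum>j'<d. G j j' * X0 j' i * K i j0)"
        by (rule sum.swap)
      also have "\<dots> = (\<Sum>i\<in>I. K i j * K i j0)"
        by (rule sum.cong[OF refl]) (simp add: GX[OF j, symmetric] sum_distrib_right)
      finally show "(\<Sum>j'<d. G j j' * v j') = 0" by (simp add: G_def)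
    qed
    then have "\<forall>j<d. v j = 0" by (rule Ginj)
    then show ?thesis using j by (simp add: v_def)
  qed
  have P0: "penrose I {..<d} K X0"
    unfolding penrose_def
  proof (intro conjI ballI)
    fix i j assume i: "i \<in> I" and j: "j \<in> {..<d}"
    have "(\<Sum>i'\<in>I. (\<Sum>j'<d. K i j' * X0 j' i') * K i' j) = (\<Sum>i'\<in>I. \<Sum>j'<d. K i j' * X0 j' i' * K i' j)"
      by (simp add: sum_distrib_right)
    also have "\<dots> = (\<Sum>j'<d. \<Sum>i'\<in>I. K i j' * X0 j' i' * K i' j)" by (rule sum.swap)
    also have "\<dots> = (\<Sum>j'<d. K i j' * (\<Sum>i'\<in>I. X0 j' i' * K i' j))"
      by (simp add: sum_distrib_left mult_ac)
    also have "\<dots> = (\<Sum>j'<d. K i j' * (if j' = j then 1 else 0))"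
      using j by (intro sum.cong) (simp_all add: XK)
    also have "\<dots> = K i j" using j by (simp add: sum_delta_mult')
    finally show "(\<Sum>i'\<in>I. (\<Sum>j'\<in>{..<d}. K i j' * X0 j' i') * K i' j) = K i j" by simp
  next
    fix j i assume j: "j \<in> {..<d}" and i: "i \<in> I"
    have "(\<Sum>j'<d. (\<Sum>i'\<in>I. X0 j i' * K i' j') * X0 j' i) = (\<Sum>j'<d. (if j = j' then 1 else 0) * X0 j' i)"
      using j by (intro sum.cong) (simp_all add: XK)
    also have "\<dots> = X0 j i" using j by (simp add: sum_delta_mult2)
    finally show "(\<Sum>j'\<in>{..<d}. (\<Sum>i'\<in>I. X0 j i' * K i' j') * X0 j' i) = X0 j i" by simp
  next
    fix i i' assume i: "i \<in> I" and i': "i' \<in> I"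
    have e: "(\<Sum>j<d. K a j * X0 j b) = (\<Sum>j<d. \<Sum>j'<d. G j j' * X0 j' a * X0 j b)" if "a \<in> I" for a b
      by (rule sum.cong[OF refl]) (simp add: GX[OF _ that, symmetric] sum_distrib_right)
    have "(\<Sum>j<d. \<Sum>j'<d. G j j' * X0 j' i * X0 j i') = (\<Sum>j'<d. \<Sum>j<d. G j j' * X0 j' i * X0 j i')"
      by (rule sum.swap)
    also have "\<dots> = (\<Sum>j<d. \<Sum>j'<d. G j j' * X0 j' i' * X0 j i)"
      by (intro sum.cong refl) (subst Gsym, simp add: mult_ac)
    finally show "(\<Sum>j\<in>{..<d}. K i j * X0 j i') = (\<Sum>j\<in>{..<d}. K i' j * X0 j i)"
      using e[OF i, of i'] e[OF i', of i] by simp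
  next
    fix j j' assume "j \<in> {..<d}" "j' \<in> {..<d}"
    then show "(\<Sum>i\<in>I. X0 j i * K i j') = (\<Sum>i\<in>I. X0 j' i * K i j)" by (simp add: XK)
  qed
  have uniq: "Y = X0" if Y0: "\<forall>j i. j \<notin> {..<d} \<or> i \<notin> I \<longrightarrow> Y j i = 0" and PY: "penrose I {..<d} K Y" for Y
  proof (rule ext, rule ext)
    fix j i
    show "Y j i = X0 j i"
    proof (cases "j < d \<and> i \<in> I")
      case True
      have "\<forall>j<d. (\<Sum>j'<d. G j j' * (Y j' i - X0 j' i)) = 0"
      proof (intro allI impI)
        fix j assume j: "j < d"
        have "(\<Sum>j'<d. G j j' * Y j' i) = K i j"
          using penrose_G[OF PY, of j i] j True by (simp add: G_def)
        then show "(\<Sum>j'<d. G j j' * (Y j' i - X0 j' i)) = 0"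
          using GX[OF j] True by (simp add: right_diff_distrib sum_subtractf)
      qed
      then have "\<forall>j<d. Y j i - X0 j i = 0" by (rule Ginj)
      then show ?thesis using True by simp
    next
      case False
      then show ?thesis using Y0 by (auto simp: X0_def)
    qed
  qed
  have X00: "\<forall>j i. j \<notin> {..<d} \<or> i \<notin> I \<longrightarrow> X0 j i = 0" by (auto simp: X0_def)
  have pe: "pinv I {..<d} K = X0"
    unfolding pinv_def
  proof (rule the_equality)
    show "(\<forall>j i. j \<notin> {..<d} \<or> i \<notin> I \<longrightarrow> X0 j i = 0) \<and> penrose I {..<d} K X0"
      using X00 P0 by blast
  next
    fix Y assume "(\<forall>j i. j \<notin> {..<d} \<or> i \<notin> I \<longrightarrow> Y j i = 0) \<and> penrose I {..<d} K Y"
    then show "Y = X0" using uniq by blast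
  qed
  show "penrose I {..<d} K (pinv I {..<d} K)" using pe P0 by simp
  show "\<And>j j'. j < d \<Longrightarrow> j' < d \<Longrightarrow> (\<Sum>i\<in>I. pinv I {..<d} K j i * K i j') = (if j = j' then 1 else 0)"
    using pe XK by simp
qed


lemma finite_tests_at: "finite (tests_at H h :: ('ob::finite,'a::finite) test set)"
proof -
  have "tests_at H h \<subseteq> {xs :: ('ob \<times> 'a) list. set xs \<subseteq> UNIV \<and> length xs \<le> H} \<times> (UNIV :: 'ob set)"
    by (auto simp: tests_at_def)
  moreover have "finite ({xs :: ('ob \<times> 'a) list. set xs \<subseteq> UNIV \<and> length xs \<le> H} \<times> (UNIV :: 'ob set))"
    by (intro finite_cartesian_product finite_lists_length_le) auto
  ultimately show ?thesis by (rule finite_subset)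
qed

lemma indep_len_bound:
  fixes f :: "('ob::finite,'a::finite) model"
  assumes "lin_indep_hists f T hs" and fT: "finite T"
  shows "length hs \<le> card T"
proof -
  define w where "w j = (\<lambda>t. if t \<in> T then test_prob f (hs ! j) t else 0)" for j
  define e where "e t = (\<lambda>s. if s = t then 1 else (0::real))" for t :: "('ob,'a) test"
  show ?thesis
  proof (rule list_indep_bound[where w=w and e=e, OF fT])
    fix j assume "j < length hs"
    show "\<exists>b. w j = (\<lambda>x. \<Sum>k\<in>T. b k * e k x)"
      by (rule exI[of _ "\<lambda>t. test_prob f (hs ! j) t"]) (simp add: fun_eq_iff w_def e_def sum_delta_mult fT)
  next
    fix c assume h: "\<And>x. (\<Sum>j<length hs. c j * w j x) = 0"
    have "\<forall>t\<in>T. (\<Sum>j<length hs. c j * test_prob f (hs ! j) t) = 0"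
    proof
      fix t assume t: "t \<in> T"
      show "(\<Sum>j<length hs. c j * test_prob f (hs ! j) t) = 0" using h[of t] t by (simp add: w_def)
    qed
    then show "\<forall>j<length hs. c j = 0" using assms(1) unfolding lin_indep_hists_def by blast
  qed
qed

lemma exists_max_indep:
  fixes f :: "('ob::finite,'a::finite) model"
  shows "\<exists>gs. set gs \<subseteq> hists l \<and> length gs = d_PSR H f l \<and> lin_indep_hists f (tests_at H (Suc l)) gs"
proof -
  let ?T = "tests_at H (Suc l) :: ('ob,'a) test set"
  let ?N = "{n. \<exists>hs. set hs \<subseteq> hists l \<and> length hs = n \<and> lin_indep_hists f ?T hs}"
  have "?N \<subseteq> {..card ?T}" using indep_len_bound[OF _ finite_tests_at] by auto
  then have fN: "finite ?N" by (rule finite_subset) simp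
  have "lin_indep_hists f ?T []" by (simp add: lin_indep_hists_def)
  then have "0 \<in> ?N" by (intro CollectI exI[of _ "[]"]) simp
  then have ne: "?N \<noteq> {}" by blast
  have "Max ?N \<in> ?N" by (rule Max_in[OF fN ne])
  then show ?thesis unfolding d_PSR_def by blast
qed

lemma max_indep_spans:
  fixes f :: "('ob::finite,'a::finite) model"
  assumes gs: "set gs \<subseteq> hists l" "length gs = d_PSR H f l" "lin_indep_hists f (tests_at H (Suc l)) gs"
    and tau: "\<tau> \<in> hists l"
  shows "\<exists>c. \<forall>t\<in>tests_at H (Suc l). test_prob f \<tau> t = (\<Sum>j<length gs. c j * test_prob f (gs ! j) t)"
proof (rule ccontr)
  assume ns: "\<not> ?thesis"
  let ?T = "tests_at H (Suc l) :: ('ob,'a) test set"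
  let ?N = "{n. \<exists>hs. set hs \<subseteq> hists l \<and> length hs = n \<and> lin_indep_hists f ?T hs}"
  have "?N \<subseteq> {..card ?T}" using indep_len_bound[OF _ finite_tests_at] by auto
  then have fN: "finite ?N" by (rule finite_subset) simp
  let ?d = "length gs"
  have ind: "lin_indep_hists f ?T (gs @ [\<tau>])"
    unfolding lin_indep_hists_def
  proof (rule allI, rule impI)
    fix c assume h: "\<forall>t\<in>?T. (\<Sum>j<length (gs @ [\<tau>]). c j * test_prob f ((gs @ [\<tau>]) ! j) t) = 0"
    have h': "(\<Sum>j<?d. c j * test_prob f (gs ! j) t) + c ?d * test_prob f \<tau> t = 0" if "t \<in> ?T" for t
    proof -
      have "(\<Sum>j<?d. c j * test_prob f ((gs @ [\<tau>]) ! j) t) = (\<Sum>j<?d. c j * test_prob f (gs ! j) t)"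
        by (rule sum.cong) (auto simp: nth_append)
      then show ?thesis using h that by (simp add: nth_append)
    qed
    have cd: "c ?d = 0"
    proof (rule ccontr)
      assume cd0: "c ?d \<noteq> 0"
      have "\<forall>t\<in>?T. test_prob f \<tau> t = (\<Sum>j<?d. (- c j / c ?d) * test_prob f (gs ! j) t)"
      proof
        fix t assume "t \<in> ?T"
        have "(\<Sum>j<?d. (- c j / c ?d) * test_prob f (gs ! j) t) = (\<Sum>j<?d. c j * test_prob f (gs ! j) t) * (- 1 / c ?d)"
          by (subst sum_distrib_right) (rule sum.cong, simp_all)
        also have "(\<Sum>j<?d. c j * test_prob f (gs ! j) t) = - (c ?d * test_prob f \<tau> t)"
          using h'[OF \<open>t \<in> ?T\<close>] by simp
        also have "- (c ?d * test_prob f \<tau> t) * (- 1 / c ?d) = test_prob f \<tau> t" using cd0 by simp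
        finally show "test_prob f \<tau> t = (\<Sum>j<?d. (- c j / c ?d) * test_prob f (gs ! j) t)" by simp
      qed
      then have "\<exists>c. \<forall>t\<in>?T. test_prob f \<tau> t = (\<Sum>j<?d. c j * test_prob f (gs ! j) t)"
        by (rule exI[of _ "\<lambda>j. - c j / c ?d"])
      with ns show False by simp
    qed
    have "\<forall>t\<in>?T. (\<Sum>j<?d. c j * test_prob f (gs ! j) t) = 0" using h' cd by simp
    then have "\<forall>j<?d. c j = 0" using gs(3) unfolding lin_indep_hists_def by blast
    with cd show "\<forall>j<length (gs @ [\<tau>]). c j = 0" using less_Suc_eq by auto
  qed
  have "set (gs @ [\<tau>]) \<subseteq> hists l" using gs tau by auto
  with ind have "Suc ?d \<in> ?N" by (intro CollectI exI[of _ "gs @ [\<tau>]"]) simp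
  then have "Suc ?d \<le> Max ?N" by (rule Max_ge[OF fN])
  then show False using gs(2) unfolding d_PSR_def by simp
qed


lemma core_choice_indep:
  fixes f :: "('ob::finite,'a::finite) model"
  assumes coreL: "is_core_test_set H f (U (Suc l)) (Suc l)"
    and hs: "hs \<in> core_choices H U f l"
    and c0: "\<forall>u\<in>U (Suc l). (\<Sum>j<length hs. c j * test_prob f (hs ! j) u) = 0"
  shows "\<forall>j<length hs. c j = 0"
proof (rule ccontr)
  assume "\<not> ?thesis"
  then obtain j0 where j0: "j0 < length hs" "c j0 \<noteq> 0" by auto
  let ?T = "tests_at H (Suc l) :: ('ob,'a) test set"
  let ?UU = "U (Suc l)"
  let ?d = "length hs"
  have hsd: "length hs = d_PSR H f l" and hsh: "set hs \<subseteq> hists l"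
    and hsp: "\<forall>\<tau>\<in>hists l. \<exists>c. \<forall>u\<in>?UU. test_prob f \<tau> u = (\<Sum>j<?d. c j * test_prob f (hs ! j) u)"
    using hs by (auto simp: core_choices_def)
  have UT: "?UU \<subseteq> ?T" and cr: "\<forall>t\<in>?T. \<exists>mt. \<forall>\<tau>\<in>hists l. test_prob f \<tau> t = inner_on ?UU mt (test_prob f \<tau>)"
    using coreL by (auto simp: is_core_test_set_def)
  have fUU: "finite ?UU" using UT finite_tests_at by (rule finite_subset)
  from cr obtain M where M: "\<And>t \<tau>. t \<in> ?T \<Longrightarrow> \<tau> \<in> hists l \<Longrightarrow> test_prob f \<tau> t = inner_on ?UU (M t) (test_prob f \<tau>)"
    by metis
  obtain gs where gs: "set gs \<subseteq> hists l" "length gs = d_PSR H f l" "lin_indep_hists f ?T gs"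
    using exists_max_indep by blast
  define Ks where "Ks = {..<?d} - {j0}"
  define e where "e j = (\<lambda>t. if t \<in> ?T then inner_on ?UU (M t) (test_prob f (hs ! j)) else 0)" for j
  define w where "w i = (\<lambda>t. if t \<in> ?T then test_prob f (gs ! i) t else 0)" for i
  have fK: "finite Ks" by (simp add: Ks_def)
  have "length gs \<le> card Ks"
  proof (rule list_indep_bound[where w=w and e=e, OF fK])
    fix c' assume h: "\<And>x. (\<Sum>j<length gs. c' j * w j x) = 0"
    have "\<forall>t\<in>?T. (\<Sum>j<length gs. c' j * test_prob f (gs ! j) t) = 0"
    proof
      fix t assume t: "t \<in> ?T"
      show "(\<Sum>j<length gs. c' j * test_prob f (gs ! j) t) = 0" using h[of t] t by (simp add: w_def)
    qed
    then show "\<forall>j<length gs. c' j = 0" using gs(3) unfolding lin_indep_hists_def by blast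
  next
    fix i assume i: "i < length gs"
    then have gi: "gs ! i \<in> hists l" using gs(1) by auto
    obtain a where a: "\<forall>u\<in>?UU. test_prob f (gs ! i) u = (\<Sum>j<?d. a j * test_prob f (hs ! j) u)"
      using hsp gi by blast
    define b where "b j = a j - a j0 * c j / c j0" for j
    have split: "(\<Sum>j<?d. g j) = g j0 + (\<Sum>j\<in>Ks. g j)" for g :: "nat \<Rightarrow> real"
      unfolding Ks_def using j0(1) by (simp add: sum.remove[of "{..<?d}" j0])
    have gsU: "test_prob f (gs ! i) u = (\<Sum>j\<in>Ks. b j * test_prob f (hs ! j) u)" if u: "u \<in> ?UU" for u
    proof -
      have cz: "c j0 * test_prob f (hs ! j0) u + (\<Sum>j\<in>Ks. c j * test_prob f (hs ! j) u) = 0"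
        using c0 u split[of "\<lambda>j. c j * test_prob f (hs ! j) u"] by simp
      have "(\<Sum>j\<in>Ks. b j * test_prob f (hs ! j) u)
          = (\<Sum>j\<in>Ks. a j * test_prob f (hs ! j) u) - a j0 / c j0 * (\<Sum>j\<in>Ks. c j * test_prob f (hs ! j) u)"
      proof -
        have "(\<Sum>j\<in>Ks. b j * test_prob f (hs ! j) u) = (\<Sum>j\<in>Ks. a j * test_prob f (hs ! j) u - a j0 / c j0 * (c j * test_prob f (hs ! j) u))"
          by (rule sum.cong) (simp_all add: b_def algebra_simps)
        then show ?thesis by (simp add: sum_subtractf sum_distrib_left)
      qed
      also have "(\<Sum>j\<in>Ks. c j * test_prob f (hs ! j) u) = - (c j0 * test_prob f (hs ! j0) u)"
        using cz by simp
      also have "(\<Sum>j\<in>Ks. a j * test_prob f (hs ! j) u) - a j0 / c j0 * - (c j0 * test_prob f (hs ! j0) u)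
          = a j0 * test_prob f (hs ! j0) u + (\<Sum>j\<in>Ks. a j * test_prob f (hs ! j) u)"
        using j0(2) by simp
      also have "\<dots> = test_prob f (gs ! i) u"
        using a u split[of "\<lambda>j. a j * test_prob f (hs ! j) u"] by simp
      finally show ?thesis by simp
    qed
    have "w i = (\<lambda>t. \<Sum>j\<in>Ks. b j * e j t)"
    proof
      fix t
      show "w i t = (\<Sum>j\<in>Ks. b j * e j t)"
      proof (cases "t \<in> ?T")
        case True
        have "w i t = inner_on ?UU (M t) (test_prob f (gs ! i))" using M[OF True gi] True by (simp add: w_def)
        also have "\<dots> = (\<Sum>u\<in>?UU. M t u * (\<Sum>j\<in>Ks. b j * test_prob f (hs ! j) u))"
          unfolding inner_on_def by (rule sum.cong) (simp_all add: gsU)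
        also have "\<dots> = (\<Sum>u\<in>?UU. \<Sum>j\<in>Ks. b j * (M t u * test_prob f (hs ! j) u))"
          by (simp add: sum_distrib_left mult_ac)
        also have "\<dots> = (\<Sum>j\<in>Ks. \<Sum>u\<in>?UU. b j * (M t u * test_prob f (hs ! j) u))"
          by (rule sum.swap)
        also have "\<dots> = (\<Sum>j\<in>Ks. b j * e j t)"
          using True by (simp add: e_def inner_on_def sum_distrib_left)
        finally show ?thesis .
      next
        case False
        then show ?thesis by (simp add: w_def e_def)
      qed
    qed
    then show "\<exists>b. w i = (\<lambda>x. \<Sum>k\<in>Ks. b k * e k x)" by blast
  qed
  moreover have "card Ks = ?d - 1" using j0(1) by (simp add: Ks_def)
  ultimately show False using gs(2) hsd j0(1) by simp
qed

lemma Kcols_props: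
  fixes f :: "('ob::finite,'a::finite) model"
  assumes valid: "valid_model H f"
    and core: "\<And>l'. l' \<in> {1..H} \<Longrightarrow> is_core_test_set H f (U l') l'"
    and lH: "l < H"
  shows "set (K_cols H U f l) \<subseteq> hists l"
    and "\<And>c. \<forall>u\<in>U (Suc l). (\<Sum>j<length (K_cols H U f l). c j * test_prob f (K_cols H U f l ! j) u) = 0
           \<Longrightarrow> \<forall>j<length (K_cols H U f l). c j = 0"
proof -
  have coreL: "is_core_test_set H f (U (Suc l)) (Suc l)" using core lH by simp
  have "set (K_cols H U f l) \<subseteq> hists l \<and> (\<forall>c. (\<forall>u\<in>U (Suc l). (\<Sum>j<length (K_cols H U f l). c j * test_prob f (K_cols H U f l ! j) u) = 0)
           \<longrightarrow> (\<forall>j<length (K_cols H U f l). c j = 0))"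
  proof (cases "l = 0")
    case True
    have K0: "K_cols H U f l = [[]]" using True by (simp add: K_cols_def)
    have "c 0 = 0" if h: "\<forall>u\<in>U (Suc 0). c 0 * test_prob f [] u = 0" for c :: "nat \<Rightarrow> real"
    proof (rule ccontr)
      assume c0: "c 0 \<noteq> 0"
      have z: "\<forall>u\<in>U 1. test_prob f [] u = 0" using h c0 by simp
      have H1: "1 \<le> H" using lH True by simp
      have "f [] ob = 0" for ob
      proof -
        have t: "([], ob) \<in> tests_at H 1" using H1 by (simp add: tests_at_def)
        obtain mt where "\<forall>\<tau>\<in>(hists 0 :: ('ob,'a) hist set). test_prob f \<tau> ([], ob) = inner_on (U 1) mt (test_prob f \<tau>)"
          using coreL True t by (auto simp: is_core_test_set_def)
        then have "test_prob f [] ([], ob) = inner_on (U 1) mt (test_prob f [])" by simp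
        also have "\<dots> = 0" using z by (simp add: inner_on_def)
        finally show ?thesis by (simp add: test_prob_def obs_prob_def)
      qed
      moreover have "(\<Sum>ob\<in>UNIV. f [] ob) = 1" using valid lH by (simp add: valid_model_def)
      ultimately show False by simp
    qed
    then show ?thesis using K0 True by auto
  next
    case False
    let ?CC = "core_choices H U f l"
    obtain gs where gs: "set gs \<subseteq> hists l" "length gs = d_PSR H f l" "lin_indep_hists f (tests_at H (Suc l)) gs"
      using exists_max_indep by blast
    have UT: "U (Suc l) \<subseteq> tests_at H (Suc l)" using coreL by (simp add: is_core_test_set_def)
    have "gs \<in> ?CC"
      unfolding core_choices_def
    proof (intro CollectI conjI ballI)
      fix \<tau> :: "('ob,'a) hist" assume "\<tau> \<in> hists l"
      then obtain c where "\<forall>t\<in>tests_at H (Suc l). test_prob f \<tau> t = (\<Sum>j<length gs. c j * test_prob f (gs ! j) t)"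
        using max_indep_spans[OF gs] by blast
      then show "\<exists>c. \<forall>u\<in>U (Suc l). test_prob f \<tau> u = (\<Sum>j<length gs. c j * test_prob f (gs ! j) u)"
        using UT by blast
    qed (use gs in auto)
    then have ne: "?CC \<noteq> {}" by blast
    have "?CC \<subseteq> {hs :: ('ob,'a) hist list. set hs \<subseteq> hists l \<and> length hs = d_PSR H f l}" by (auto simp: core_choices_def)
    moreover have "finite {hs :: ('ob,'a) hist list. set hs \<subseteq> hists l \<and> length hs = d_PSR H f l}"
      by (rule finite_lists_length_eq) simp
    ultimately have fin: "finite ?CC" by (rule finite_subset)
    have "K_cols H U f l = arg_min_on (Kdag_norm U f l) ?CC"
      using False by (simp add: K_cols_def arg_min_on_def)
    then have inCC: "K_cols H U f l \<in> ?CC" using arg_min_if_finite(1)[OF fin ne] by simp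
    show ?thesis
      using inCC core_choice_indep[OF coreL inCC] by (auto simp: core_choices_def)
  qed
  then show "set (K_cols H U f l) \<subseteq> hists l"
    and "\<And>c. \<forall>u\<in>U (Suc l). (\<Sum>j<length (K_cols H U f l). c j * test_prob f (K_cols H U f l ! j) u) = 0
           \<Longrightarrow> \<forall>j<length (K_cols H U f l). c j = 0" by blast+
qed


lemma M_seq_prop:
  fixes f :: "('ob::finite,'a::finite) model"
  assumes valid: "valid_model H f"
    and repr: "\<And>l ob a u \<tau>. l \<in> {1..<H} \<Longrightarrow> u \<in> U (Suc l) \<Longrightarrow> \<tau> \<in> hists (l - 1) \<Longrightarrow>
        test_prob f \<tau> (ext_test ob a u) = inner_on (U l) (m f l (ext_test ob a u)) (test_prob f \<tau>)"
  shows "1 \<le> l \<Longrightarrow> l + length \<tau> \<le> H \<Longrightarrow> \<sigma> \<in> hists (l - 1) \<Longrightarrow> \<forall>v\<in>U l. x v = c * test_prob f \<sigma> v \<Longrightarrow>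
    u \<in> U (l + length \<tau>) \<Longrightarrow> M_seq U m f l \<tau> x u = c * ocond f \<sigma> \<tau> * test_prob f (\<sigma> @ \<tau>) u"
proof (induction \<tau> arbitrary: l \<sigma> x c)
  case Nil
  then show ?case by simp
next
  case (Cons p \<tau>)
  obtain ob a where p: "p = (ob,a)" by (cases p)
  have lH: "l \<in> {1..<H}" using Cons.prems by simp
  have sl: "length \<sigma> = l - 1" using Cons.prems by (simp add: hists_def)
  have lt: "length \<sigma> < H" using sl lH by auto
  have fnn: "f \<sigma> ob \<ge> 0" using valid lt unfolding valid_model_def by blast
  have step: "\<forall>v\<in>U (Suc l). M_app U m f l ob a x v = (c * f \<sigma> ob) * test_prob f (\<sigma> @ [(ob,a)]) v"
  proof
    fix v assume v: "v \<in> U (Suc l)"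
    have "M_app U m f l ob a x v = inner_on (U l) (m f l (ext_test ob a v)) (\<lambda>w. c * test_prob f \<sigma> w)"
      unfolding M_app_def inner_on_def using Cons.prems(4) by (intro sum.cong) auto
    also have "\<dots> = c * inner_on (U l) (m f l (ext_test ob a v)) (test_prob f \<sigma>)"
      by (simp add: inner_on_def sum_distrib_left mult_ac)
    also have "\<dots> = c * test_prob f \<sigma> (ext_test ob a v)" using repr[OF lH v Cons.prems(3)] by simp
    also have "\<dots> = c * f \<sigma> ob * test_prob f (\<sigma> @ [(ob,a)]) v" using test_prob_ext[where f=f and \<sigma>=\<sigma> and ob=ob, OF fnn] by simp
    finally show "M_app U m f l ob a x v = (c * f \<sigma> ob) * test_prob f (\<sigma> @ [(ob,a)]) v" .
  qed
  have s2: "\<sigma> @ [(ob,a)] \<in> hists (Suc l - 1)" using sl lH by (simp add: hists_def)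
  have "M_seq U m f (Suc l) \<tau> (M_app U m f l ob a x) u = (c * f \<sigma> ob) * ocond f (\<sigma> @ [(ob,a)]) \<tau> * test_prob f ((\<sigma> @ [(ob,a)]) @ \<tau>) u"
    using Cons.IH[OF _ _ s2 step] Cons.prems by simp
  then show ?case by (simp add: p mult_ac)
qed

lemma norm1_cong: "\<forall>u\<in>A. x u = x' u \<Longrightarrow> norm1_on A x = norm1_on A x'"
  unfolding norm1_on_def by simp

lemma norm1_scale: "norm1_on A (\<lambda>u. a * x u) = \<bar>a\<bar> * norm1_on A x"
  unfolding norm1_on_def by (simp add: abs_mult sum_distrib_left)

lemma inner_span:
  assumes "\<forall>w\<in>A. mm w = (\<Sum>j<d. cc j * K w j)"
    and "\<And>j. j < d \<Longrightarrow> (\<Sum>w\<in>A. K w j * y w) = (\<Sum>w\<in>A. K w j * y' w)"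
  shows "inner_on A mm y = inner_on A mm y'"
proof -
  have e: "inner_on A mm g = (\<Sum>j<d. cc j * (\<Sum>w\<in>A. K w j * g w))" for g
  proof -
    have "inner_on A mm g = (\<Sum>w\<in>A. \<Sum>j<d. cc j * (K w j * g w))"
      unfolding inner_on_def using assms(1) by (intro sum.cong) (simp_all add: sum_distrib_left sum_distrib_right mult_ac)
    also have "\<dots> = (\<Sum>j<d. \<Sum>w\<in>A. cc j * (K w j * g w))" by (rule sum.swap)
    also have "\<dots> = (\<Sum>j<d. cc j * (\<Sum>w\<in>A. K w j * g w))" by (simp add: sum_distrib_left)
    finally show ?thesis .
  qed
  show ?thesis unfolding e using assms(2) by simp
qed


lemma main_term:
  fixes fk :: "('ob::finite,'a::finite) model" and \<pi> :: "('ob,'a) policy"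
  assumes valid: "valid_model H fk" and vp: "valid_policy H \<pi>" and apos: "\<alpha> > 0"
    and core: "\<And>l'. l' \<in> {1..H} \<Longrightarrow> is_core_test_set H fk (U l') l'"
    and Kdag: "\<And>l. l < H \<Longrightarrow> Kdag_norm U fk l (K_cols H U fk l) \<le> 1 / \<alpha>"
    and repr: "\<And>l ob a u \<tau>. l \<in> {1..<H} \<Longrightarrow> u \<in> U (Suc l) \<Longrightarrow> \<tau> \<in> hists (l - 1) \<Longrightarrow>
        test_prob fk \<tau> (ext_test ob a u) = inner_on (U l) (m fk l (ext_test ob a u)) (test_prob fk \<tau>)"
    and colsp: "\<And>l ob a u. l \<in> {1..<H} \<Longrightarrow> u \<in> U (Suc l) \<Longrightarrow>
        in_colspace_K H U fk (l - 1) (m fk l (ext_test ob a u))"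
    and UAge: "1 \<le> real (UA_card H U) / \<alpha>"
    and lh: "l \<le> h" and hH: "h < H" and t0: "\<tau>0 \<in> hists l"
  shows "(\<Sum>\<tau>'\<in>hists (h - l). pcond \<pi> \<tau>0 \<tau>' * norm1_on (U (Suc h)) (M_seq U m fk (Suc l) \<tau>' y))
     \<le> real (UA_card H U) / \<alpha> * norm1_on (U (Suc l)) y"
proof (cases "l = h")
  case True
  have eq: "(\<Sum>\<tau>'\<in>hists (h - l). pcond \<pi> \<tau>0 \<tau>' * norm1_on (U (Suc h)) (M_seq U m fk (Suc l) \<tau>' y))
     = norm1_on (U (Suc l)) y" using True by simp
  have "1 * norm1_on (U (Suc l)) y \<le> real (UA_card H U) / \<alpha> * norm1_on (U (Suc l)) y"
    by (rule mult_right_mono[OF UAge norm1_nonneg])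
  then show ?thesis using eq by simp
next
  case False
  define n where "n = h - l"
  have n1: "n \<ge> 1" and hn: "Suc l + n = Suc h" using False lh by (auto simp: n_def)
  define hs where "hs = K_cols H U fk l"
  define d where "d = length hs"
  define UU where "UU = U (Suc l)"
  define K where "K = Kmat fk hs"
  define X where "X = pinv UU {..<d} K"
  have lH: "l < H" using lh hH by simp
  have UUT: "UU \<subseteq> tests_at H (Suc l)" using core[of "Suc l"] lH by (simp add: UU_def is_core_test_set_def)
  have fUU: "finite UU" using UUT finite_tests_at by (rule finite_subset)
  have hsh: "set hs \<subseteq> hists l" using Kcols_props(1)[OF valid core lH] by (simp add: hs_def)
  have ind: "\<And>c. \<forall>i\<in>UU. (\<Sum>j<d. c j * K i j) = 0 \<Longrightarrow> \<forall>j<d. c j = 0"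
    using Kcols_props(2)[OF valid core lH] by (simp add: hs_def d_def UU_def K_def Kmat_def)
  have PX: "penrose UU {..<d} K X" unfolding X_def by (rule pinv_props(1)[OF fUU ind])
  define z where "z j = (\<Sum>i\<in>UU. X j i * y i)" for j
  define ybar where "ybar v = (\<Sum>j<d. z j * test_prob fk (hs ! j) v)" for v
  have UhT: "U (Suc h) \<subseteq> tests_at H (Suc h)" using core[of "Suc h"] hH by (simp add: is_core_test_set_def)
  have fUh: "finite (U (Suc h))" using UhT finite_tests_at by (rule finite_subset)
  \<comment> \<open>Step 1: replace y by its projection\<close>
  have step1: "M_seq U m fk (Suc l) \<tau>' y u = M_seq U m fk (Suc l) \<tau>' ybar u"
    if t: "\<tau>' \<in> hists n" and u: "u \<in> U (Suc h)" for \<tau>' u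
  proof -
    have "length \<tau>' = n" using t by (simp add: hists_def)
    then obtain p \<tau>'' where tc: "\<tau>' = p # \<tau>''" using n1 by (cases \<tau>') auto
    obtain ob a where p: "p = (ob,a)" by (cases p)
    have ltt: "length \<tau>'' = n - 1" using t tc by (simp add: hists_def)
    have eq: "\<forall>v\<in>U (Suc (Suc l)). M_app U m fk (Suc l) ob a y v = M_app U m fk (Suc l) ob a ybar v"
    proof
      fix v assume v: "v \<in> U (Suc (Suc l))"
      have sl: "Suc l \<in> {1..<H}" using False lh hH by simp
      have "in_colspace_K H U fk l (m fk (Suc l) (ext_test ob a v))" using colsp[OF sl v, of ob a] by simp
      then obtain cc where cc0: "\<forall>w\<in>UU. m fk (Suc l) (ext_test ob a v) w = (\<Sum>j<d. cc j * test_prob fk (hs ! j) w)"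
        unfolding in_colspace_K_def Let_def hs_def d_def UU_def by blast
      have cc: "\<forall>w\<in>UU. m fk (Suc l) (ext_test ob a v) w = (\<Sum>j<d. cc j * K w j)"
        using cc0 by (simp add: K_def Kmat_def)
      have "inner_on UU (m fk (Suc l) (ext_test ob a v)) y = inner_on UU (m fk (Suc l) (ext_test ob a v)) ybar"
      proof (rule inner_span[OF cc])
        fix j assume j: "j < d"
        have "(\<Sum>w\<in>UU. K w j * y w) = (\<Sum>w\<in>UU. K w j * (\<Sum>j'\<in>{..<d}. (\<Sum>i'\<in>UU. X j' i' * y i') * K w j'))"
          by (rule penrose_proj[OF PX]) (use j in simp)
        also have "\<dots> = (\<Sum>w\<in>UU. K w j * ybar w)"
        proof (rule sum.cong[OF refl])
          fix w assume "w \<in> UU"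
          have "(\<Sum>j'\<in>{..<d}. (\<Sum>i'\<in>UU. X j' i' * y i') * K w j') = ybar w"
            unfolding ybar_def z_def K_def Kmat_def by (rule sum.cong) simp_all
          then show "K w j * (\<Sum>j'\<in>{..<d}. (\<Sum>i'\<in>UU. X j' i' * y i') * K w j') = K w j * ybar w" by simp
        qed
        finally show "(\<Sum>w\<in>UU. K w j * y w) = (\<Sum>w\<in>UU. K w j * ybar w)" .
      qed
      then show "M_app U m fk (Suc l) ob a y v = M_app U m fk (Suc l) ob a ybar v"
        by (simp add: M_app_def UU_def)
    qed
    have u': "u \<in> U (Suc (Suc l) + length \<tau>'')" using u ltt hn n1 by simp
    show ?thesis using M_seq_cong[OF eq u'] by (simp add: tc p)
  qed
  have step2: "M_seq U m fk (Suc l) \<tau>' ybar u = (\<Sum>j<d. z j * (ocond fk (hs ! j) \<tau>' * test_prob fk (hs ! j @ \<tau>') u))"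
    if t: "\<tau>' \<in> hists n" and u: "u \<in> U (Suc h)" for \<tau>' u
  proof -
    have "M_seq U m fk (Suc l) \<tau>' ybar u = (\<Sum>j<d. z j * M_seq U m fk (Suc l) \<tau>' (test_prob fk (hs ! j)) u)"
      unfolding ybar_def by (rule M_seq_sum)
    also have "\<dots> = (\<Sum>j<d. z j * (ocond fk (hs ! j) \<tau>' * test_prob fk (hs ! j @ \<tau>') u))"
    proof (rule sum.cong[OF refl])
      fix j assume "j \<in> {..<d}"
      then have hj: "hs ! j \<in> hists (Suc l - 1)" using hsh by (auto simp: d_def)
      have lt: "length \<tau>' = n" using t by (simp add: hists_def)
      have "M_seq U m fk (Suc l) \<tau>' (test_prob fk (hs ! j)) u = 1 * ocond fk (hs ! j) \<tau>' * test_prob fk (hs ! j @ \<tau>') u"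
        by (rule M_seq_prop[where H=H and f=fk and U=U and m=m, OF valid repr]) (use lt hn hH hj u in simp_all)
      then show "z j * M_seq U m fk (Suc l) \<tau>' (test_prob fk (hs ! j)) u = z j * (ocond fk (hs ! j) \<tau>' * test_prob fk (hs ! j @ \<tau>') u)"
        by simp
    qed
    finally show ?thesis .
  qed
  let ?N = "real (card (test_actions ` U (Suc h)))"
  have NUA: "?N \<le> real (UA_card H U)"
  proof -
    have "Suc h \<in> {1..H}" using hH by simp
    then have "card (test_actions ` U (Suc h)) \<le> UA_card H U"
      unfolding UA_card_def by (intro Max_ge) auto
    then show ?thesis by simp
  qed
  have ocnn: "ocond fk (hs ! j) \<tau>' \<ge> 0" if "j < d" "\<tau>' \<in> hists n" for j \<tau>'
  proof -
    have "hs ! j \<in> set hs" using that(1) by (simp add: d_def)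
    then have "length (hs ! j) = l" using hsh by (auto simp: hists_def)
    moreover have "length \<tau>' = n" using that(2) by (simp add: hists_def)
    ultimately show ?thesis using hn hH by (intro ocond_nonneg[OF valid]) simp
  qed
  have step3: "norm1_on (U (Suc h)) (M_seq U m fk (Suc l) \<tau>' y)
      \<le> (\<Sum>j<d. \<bar>z j\<bar> * (ocond fk (hs ! j) \<tau>' * norm1_on (U (Suc h)) (test_prob fk (hs ! j @ \<tau>'))))"
    if t: "\<tau>' \<in> hists n" for \<tau>'
  proof -
    have "norm1_on (U (Suc h)) (M_seq U m fk (Suc l) \<tau>' y)
        = norm1_on (U (Suc h)) (\<lambda>u. \<Sum>j<d. z j * (ocond fk (hs ! j) \<tau>' * test_prob fk (hs ! j @ \<tau>') u))"
      using step1[OF t] step2[OF t] by (intro norm1_cong) auto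
    also have "\<dots> \<le> (\<Sum>j<d. norm1_on (U (Suc h)) (\<lambda>u. z j * (ocond fk (hs ! j) \<tau>' * test_prob fk (hs ! j @ \<tau>') u)))"
      by (rule norm1_sum)
    also have "\<dots> = (\<Sum>j<d. \<bar>z j\<bar> * (ocond fk (hs ! j) \<tau>' * norm1_on (U (Suc h)) (test_prob fk (hs ! j @ \<tau>'))))"
    proof (rule sum.cong[OF refl])
      fix j assume j: "j \<in> {..<d}"
      have "norm1_on (U (Suc h)) (\<lambda>u. z j * (ocond fk (hs ! j) \<tau>' * test_prob fk (hs ! j @ \<tau>') u))
          = \<bar>z j * ocond fk (hs ! j) \<tau>'\<bar> * norm1_on (U (Suc h)) (test_prob fk (hs ! j @ \<tau>'))"
        using norm1_scale[of "U (Suc h)" "z j * ocond fk (hs ! j) \<tau>'" "test_prob fk (hs ! j @ \<tau>')"]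
        by (simp add: mult.assoc)
      also have "\<dots> = \<bar>z j\<bar> * (ocond fk (hs ! j) \<tau>' * norm1_on (U (Suc h)) (test_prob fk (hs ! j @ \<tau>')))"
        using ocnn[of j \<tau>'] j t by (simp add: abs_mult)
      finally show "norm1_on (U (Suc h)) (\<lambda>u. z j * (ocond fk (hs ! j) \<tau>' * test_prob fk (hs ! j @ \<tau>') u))
          = \<bar>z j\<bar> * (ocond fk (hs ! j) \<tau>' * norm1_on (U (Suc h)) (test_prob fk (hs ! j @ \<tau>')))" .
    qed
    finally show ?thesis .
  qed
  have "(\<Sum>\<tau>'\<in>hists n. pcond \<pi> \<tau>0 \<tau>' * norm1_on (U (Suc h)) (M_seq U m fk (Suc l) \<tau>' y))
      \<le> (\<Sum>\<tau>'\<in>hists n. pcond \<pi> \<tau>0 \<tau>' * (\<Sum>j<d. \<bar>z j\<bar> * (ocond fk (hs ! j) \<tau>' * norm1_on (U (Suc h)) (test_prob fk (hs ! j @ \<tau>')))))"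
  proof (rule sum_mono)
    fix \<tau>' :: "('ob,'a) hist" assume t: "\<tau>' \<in> hists n"
    have "pcond \<pi> \<tau>0 \<tau>' \<ge> 0" using pcond_nonneg[OF vp] t t0 hn hH by (simp add: hists_def)
    then show "pcond \<pi> \<tau>0 \<tau>' * norm1_on (U (Suc h)) (M_seq U m fk (Suc l) \<tau>' y)
      \<le> pcond \<pi> \<tau>0 \<tau>' * (\<Sum>j<d. \<bar>z j\<bar> * (ocond fk (hs ! j) \<tau>' * norm1_on (U (Suc h)) (test_prob fk (hs ! j @ \<tau>'))))"
      using step3[OF t] by (rule mult_left_mono[rotated])
  qed
  also have "\<dots> = (\<Sum>j<d. \<bar>z j\<bar> * (\<Sum>\<tau>'\<in>hists n. pcond \<pi> \<tau>0 \<tau>' * (ocond fk (hs ! j) \<tau>' * norm1_on (U (Suc h)) (test_prob fk (hs ! j @ \<tau>')))))"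
  proof -
    have "(\<Sum>\<tau>'\<in>hists n. pcond \<pi> \<tau>0 \<tau>' * (\<Sum>j<d. \<bar>z j\<bar> * (ocond fk (hs ! j) \<tau>' * norm1_on (U (Suc h)) (test_prob fk (hs ! j @ \<tau>')))))
       = (\<Sum>\<tau>'\<in>hists n. \<Sum>j<d. \<bar>z j\<bar> * (pcond \<pi> \<tau>0 \<tau>' * (ocond fk (hs ! j) \<tau>' * norm1_on (U (Suc h)) (test_prob fk (hs ! j @ \<tau>')))))"
      by (simp add: sum_distrib_left mult.left_commute)
    also have "\<dots> = (\<Sum>j<d. \<Sum>\<tau>'\<in>hists n. \<bar>z j\<bar> * (pcond \<pi> \<tau>0 \<tau>' * (ocond fk (hs ! j) \<tau>' * norm1_on (U (Suc h)) (test_prob fk (hs ! j @ \<tau>')))))"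
      by (rule sum.swap)
    also have "\<dots> = (\<Sum>j<d. \<bar>z j\<bar> * (\<Sum>\<tau>'\<in>hists n. pcond \<pi> \<tau>0 \<tau>' * (ocond fk (hs ! j) \<tau>' * norm1_on (U (Suc h)) (test_prob fk (hs ! j @ \<tau>')))))"
      by (simp add: sum_distrib_left)
    finally show ?thesis .
  qed
  also have "\<dots> \<le> (\<Sum>j<d. \<bar>z j\<bar> * ?N)"
  proof (rule sum_mono, rule mult_left_mono)
    fix j assume j: "j \<in> {..<d}"
    have hj: "length (hs ! j) = l" using hsh j by (force simp: hists_def d_def)
    have l0: "length \<tau>0 = l" using t0 by (simp add: hists_def)
    show "(\<Sum>\<tau>'\<in>hists n. pcond \<pi> \<tau>0 \<tau>' * (ocond fk (hs ! j) \<tau>' * norm1_on (U (Suc h)) (test_prob fk (hs ! j @ \<tau>')))) \<le> ?N"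
      using mass_bound[OF vp valid l0 hj _ fUh, of n] hn hH UhT by simp
  qed simp
  also have "\<dots> = (\<Sum>j<d. \<bar>z j\<bar>) * ?N" by (simp add: sum_distrib_right)
  also have "(\<Sum>j<d. \<bar>z j\<bar>) \<le> opnorm11 UU {..<d} X * norm1_on UU y"
    unfolding z_def norm1_on_def by (rule opnorm_bound[OF fUU]) simp
  also have "opnorm11 UU {..<d} X \<le> 1 / \<alpha>"
    using Kdag[OF lH] by (simp add: Kdag_norm_def X_def UU_def d_def K_def hs_def)
  finally have "(\<Sum>\<tau>'\<in>hists n. pcond \<pi> \<tau>0 \<tau>' * norm1_on (U (Suc h)) (M_seq U m fk (Suc l) \<tau>' y))
     \<le> 1 / \<alpha> * norm1_on UU y * ?N"
    by (simp add: mult_right_mono norm1_nonneg)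
  also have "\<dots> \<le> 1 / \<alpha> * norm1_on UU y * real (UA_card H U)"
    using NUA apos norm1_nonneg[of UU y] by (intro mult_left_mono) auto
  finally show ?thesis by (simp add: n_def UU_def mult_ac)
qed


lemma UA_ge:
  fixes fk :: "('ob::finite,'a::finite) model"
  assumes valid: "valid_model H fk" and apos: "\<alpha> > 0"
    and core: "\<And>l'. l' \<in> {1..H} \<Longrightarrow> is_core_test_set H fk (U l') l'"
    and Kdag: "\<And>l. l < H \<Longrightarrow> Kdag_norm U fk l (K_cols H U fk l) \<le> 1 / \<alpha>"
    and H0: "0 < H"
  shows "1 \<le> real (UA_card H U) / \<alpha>"
proof -
  have K0: "K_cols H U fk 0 = [[]]" by (simp add: K_cols_def)
  define K where "K = Kmat fk [[]]"
  define X where "X = pinv (U (Suc 0)) {..<1} K"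
  have UT: "U (Suc 0) \<subseteq> tests_at H (Suc 0)" using core[of 1] H0 by (simp add: is_core_test_set_def)
  have fUU: "finite (U (Suc 0))" using UT finite_tests_at by (rule finite_subset)
  have ind: "\<And>c. \<forall>i\<in>U (Suc 0). (\<Sum>j<1. c j * K i j) = 0 \<Longrightarrow> \<forall>j<1. c j = 0"
    using Kcols_props(2)[OF valid core H0] by (simp add: K0 K_def Kmat_def)
  have "(\<Sum>i\<in>U (Suc 0). pinv (U (Suc 0)) {..<1} K 0 i * K i 0) = (if (0::nat) = 0 then 1 else 0)"
    by (rule pinv_props(2)[OF fUU ind]) simp_all
  then have XK: "(\<Sum>i\<in>U (Suc 0). X 0 i * K i 0) = 1" by (simp add: X_def)
  have ob: "(\<Sum>j\<in>{..<1}. \<bar>\<Sum>i\<in>U (Suc 0). X j i * K i 0\<bar>) \<le> opnorm11 (U (Suc 0)) {..<1} X * (\<Sum>i\<in>U (Suc 0). \<bar>K i 0\<bar>)"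
    by (rule opnorm_bound[OF fUU]) simp
  have lhs: "(\<Sum>j\<in>{..<1::nat}. \<bar>\<Sum>i\<in>U (Suc 0). X j i * K i 0\<bar>) = 1" using XK by simp
  have S: "(\<Sum>i\<in>U (Suc 0). \<bar>K i 0\<bar>) \<le> real (UA_card H U)"
  proof -
    have "(\<Sum>i\<in>U (Suc 0). \<bar>K i 0\<bar>) = (\<Sum>i\<in>U (Suc 0). test_prob fk [] i)"
    proof (rule sum.cong[OF refl])
      fix i assume "i \<in> U (Suc 0)"
      then have "length ([] :: ('ob,'a) hist) + length (fst i) < H" using UT by (auto simp: tests_at_def)
      then show "\<bar>K i 0\<bar> = test_prob fk [] i" using test_prob_nonneg[OF valid] by (simp add: K_def Kmat_def)
    qed
    also have "\<dots> \<le> card (test_actions ` U (Suc 0))" by (rule mass_U[OF valid fUU UT]) simp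
    also have "card (test_actions ` U (Suc 0)) \<le> UA_card H U"
      unfolding UA_card_def using H0 by (intro Max_ge) auto
    finally show ?thesis by simp
  qed
  have opn: "opnorm11 (U (Suc 0)) {..<1} X \<le> 1 / \<alpha>"
    using Kdag[OF H0] by (simp add: Kdag_norm_def K0 X_def K_def)
  have Snn: "0 \<le> (\<Sum>i\<in>U (Suc 0). \<bar>K i 0\<bar>)" by (simp add: sum_nonneg)
  have one: "1 \<le> opnorm11 (U (Suc 0)) {..<1} X * (\<Sum>i\<in>U (Suc 0). \<bar>K i 0\<bar>)" using ob lhs by simp
  have opos: "opnorm11 (U (Suc 0)) {..<1} X \<ge> 0"
  proof (rule ccontr)
    assume "\<not> opnorm11 (U (Suc 0)) {..<1} X \<ge> 0"
    then have "opnorm11 (U (Suc 0)) {..<1} X * (\<Sum>i\<in>U (Suc 0). \<bar>K i 0\<bar>) \<le> 0"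
      using Snn by (simp add: mult_nonpos_nonneg)
    with one show False by simp
  qed
  have "opnorm11 (U (Suc 0)) {..<1} X * (\<Sum>i\<in>U (Suc 0). \<bar>K i 0\<bar>) \<le> opnorm11 (U (Suc 0)) {..<1} X * real (UA_card H U)"
    using S opos by (rule mult_left_mono)
  also have "\<dots> \<le> 1 / \<alpha> * real (UA_card H U)" using opn by (rule mult_right_mono) simp
  finally show ?thesis using one by simp
qed


theorem lemma8:
  fixes H :: nat and \<alpha> :: real
    and \<F> :: "('ob::finite,'a::finite) model set"
    and U :: "nat \<Rightarrow> ('ob,'a) test set"
    and m :: "('ob,'a) model \<Rightarrow> nat \<Rightarrow> ('ob,'a) test \<Rightarrow> ('ob,'a) test \<Rightarrow> real"
    and fstar fk :: "('ob,'a) model"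
    and \<pi> :: "('ob,'a) policy"
    and h :: nat
  assumes alpha_pos: "\<alpha> > 0"
    and fstar_in: "fstar \<in> \<F>"
    and fk_in: "fk \<in> \<F>"
    and valid: "\<And>f. f \<in> \<F> \<Longrightarrow> valid_model H f"
    and core: "\<And>f l. f \<in> \<F> \<Longrightarrow> l \<in> {1..H} \<Longrightarrow> is_core_test_set H f (U l) l"
    and Kdag: "\<And>f l. f \<in> \<F> \<Longrightarrow> l < H \<Longrightarrow> Kdag_norm U f l (K_cols H U f l) \<le> 1 / \<alpha>"
    and obs_in_UH: "\<And>ob. ([], ob) \<in> U H"
    and m_repr: "\<And>f l ob a u \<tau>. f \<in> \<F> \<Longrightarrow> l \<in> {1..<H} \<Longrightarrow> u \<in> U (Suc l) \<Longrightarrow> \<tau> \<in> hists (l - 1) \<Longrightarrow>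
        test_prob f \<tau> (ext_test ob a u) = inner_on (U l) (m f l (ext_test ob a u)) (test_prob f \<tau>)"
    and m_colspace: "\<And>f l ob a u. f \<in> \<F> \<Longrightarrow> l \<in> {1..<H} \<Longrightarrow> u \<in> U (Suc l) \<Longrightarrow>
        in_colspace_K H U f (l - 1) (m f l (ext_test ob a u))"
    and pol: "valid_policy H \<pi>"
    and h_range: "h \<in> {1..H - 1}"
  shows "(\<Sum>\<tau>\<in>hists h. norm1_on (U (Suc h))
            (\<lambda>u. M_seq U m fk 1 \<tau> (q0 fk) u - M_seq U m fstar 1 \<tau> (q0 fstar) u) * pol_prob \<pi> \<tau>)
         \<le> real (UA_card H U) / \<alpha> *
           ((\<Sum>l=1..h. \<Sum>\<tau>\<in>hists l.
               norm1_on (U (Suc l))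
                 (\<lambda>u. M_app U m fk l (fst (last \<tau>)) (snd (last \<tau>)) (M_seq U m fstar 1 (butlast \<tau>) (q0 fstar)) u
                    - M_app U m fstar l (fst (last \<tau>)) (snd (last \<tau>)) (M_seq U m fstar 1 (butlast \<tau>) (q0 fstar)) u)
               * pol_prob \<pi> \<tau>)
            + norm1_on (U 1) (\<lambda>u. q0 fk u - q0 fstar u))"
proof -
  have vk: "valid_model H fk" and vs: "valid_model H fstar" using valid fk_in fstar_in by auto
  have coreK: "\<And>l'. l' \<in> {1..H} \<Longrightarrow> is_core_test_set H fk (U l') l'" using core fk_in by blast
  have KdagK: "\<And>l. l < H \<Longrightarrow> Kdag_norm U fk l (K_cols H U fk l) \<le> 1 / \<alpha>" using Kdag fk_in by blast
  have reprK: "\<And>l ob a u \<tau>. l \<in> {1..<H} \<Longrightarrow> u \<in> U (Suc l) \<Longrightarrow> \<tau> \<in> hists (l - 1) \<Longrightarrow>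
        test_prob fk \<tau> (ext_test ob a u) = inner_on (U l) (m fk l (ext_test ob a u)) (test_prob fk \<tau>)"
    using m_repr fk_in by blast
  have colspK: "\<And>l ob a u. l \<in> {1..<H} \<Longrightarrow> u \<in> U (Suc l) \<Longrightarrow>
        in_colspace_K H U fk (l - 1) (m fk l (ext_test ob a u))" using m_colspace fk_in by blast
  have hH: "h < H" and h1: "1 \<le> h" using h_range by auto
  have UAge: "1 \<le> real (UA_card H U) / \<alpha>"
    by (rule UA_ge[OF vk alpha_pos coreK KdagK]) (use hH in simp_all)
  define C where "C = real (UA_card H U) / \<alpha>"
  have C0: "C \<ge> 0" using UAge by (simp add: C_def)
  define y0 where "y0 = (\<lambda>u. q0 fk u - q0 fstar u)"
  define R where "R l \<tau> = (\<lambda>u. M_app U m fk l (fst (last \<tau>)) (snd (last \<tau>)) (M_seq U m fstar 1 (butlast \<tau>) (q0 fstar)) u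
                    - M_app U m fstar l (fst (last \<tau>)) (snd (last \<tau>)) (M_seq U m fstar 1 (butlast \<tau>) (q0 fstar)) u)"
    for l and \<tau> :: "('ob,'a) hist"
  define S where "S l = (\<Sum>\<tau>\<in>hists l. norm1_on (U (Suc l)) (R l \<tau>) * pol_prob \<pi> \<tau>)" for l
  define tm where "tm i \<tau> = (\<lambda>u. M_seq U m fk (Suc (Suc i)) (drop (Suc i) \<tau>)
      (\<lambda>v. M_app U m fk (Suc i) (fst (\<tau>!i)) (snd (\<tau>!i)) (M_seq U m fstar 1 (take i \<tau>) (q0 fstar)) v
         - M_app U m fstar (Suc i) (fst (\<tau>!i)) (snd (\<tau>!i)) (M_seq U m fstar 1 (take i \<tau>) (q0 fstar)) v) u)"
    for i and \<tau> :: "('ob,'a) hist"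
  define D where "D \<tau> = (\<lambda>u. M_seq U m fk 1 \<tau> (q0 fk) u - M_seq U m fstar 1 \<tau> (q0 fstar) u)" for \<tau> :: "('ob,'a) hist"
  have tele: "D \<tau> u = M_seq U m fk 1 \<tau> y0 u + (\<Sum>i<length \<tau>. tm i \<tau> u)" for \<tau> u
    using telescope[where U=U and m=m and g=fk and s=1 and \<tau>=\<tau> and x="q0 fk" and u=u and f=fstar and y="q0 fstar"]
    by (simp add: D_def y0_def tm_def)
  have pnn: "pol_prob \<pi> \<tau> \<ge> 0" if "\<tau> \<in> hists h" for \<tau> :: "('ob,'a) hist"
    using pol_prob_nonneg[OF pol] that hH by (simp add: hists_def)
  have tri: "norm1_on (U (Suc h)) (D \<tau>) \<le> norm1_on (U (Suc h)) (M_seq U m fk 1 \<tau> y0) + (\<Sum>i<h. norm1_on (U (Suc h)) (tm i \<tau>))"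
    if t: "\<tau> \<in> hists h" for \<tau>
  proof -
    have lt: "length \<tau> = h" using t by (simp add: hists_def)
    have "norm1_on (U (Suc h)) (D \<tau>) = norm1_on (U (Suc h)) (\<lambda>u. M_seq U m fk 1 \<tau> y0 u + (\<Sum>i<h. tm i \<tau> u))"
      using tele lt by (intro norm1_cong) simp
    also have "\<dots> \<le> norm1_on (U (Suc h)) (M_seq U m fk 1 \<tau> y0) + norm1_on (U (Suc h)) (\<lambda>u. \<Sum>i<h. tm i \<tau> u)"
      by (rule norm1_add)
    also have "norm1_on (U (Suc h)) (\<lambda>u. \<Sum>i<h. tm i \<tau> u) \<le> (\<Sum>i<h. norm1_on (U (Suc h)) (tm i \<tau>))"
      by (rule norm1_sum)
    finally show ?thesis by simp
  qed
  have T0: "(\<Sum>\<tau>\<in>hists h. norm1_on (U (Suc h)) (M_seq U m fk 1 \<tau> y0) * pol_prob \<pi> \<tau>) \<le> C * norm1_on (U 1) y0"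
  proof -
    have "(\<Sum>\<tau>\<in>hists h. norm1_on (U (Suc h)) (M_seq U m fk 1 \<tau> y0) * pol_prob \<pi> \<tau>)
        = (\<Sum>\<tau>'\<in>hists (h - 0). pcond \<pi> [] \<tau>' * norm1_on (U (Suc h)) (M_seq U m fk (Suc 0) \<tau>' y0))"
      using pol_prob_append[of \<pi> "[]"] by (simp add: mult.commute)
    also have "\<dots> \<le> C * norm1_on (U (Suc 0)) y0"
      unfolding C_def
      by (rule main_term[where H=H and fk=fk and U=U and m=m and \<pi>=\<pi> and \<alpha>=\<alpha>, OF vk pol alpha_pos coreK KdagK reprK colspK UAge _ hH]) simp_all
    finally show ?thesis by simp
  qed
  have Ti: "(\<Sum>\<tau>\<in>hists h. norm1_on (U (Suc h)) (tm i \<tau>) * pol_prob \<pi> \<tau>) \<le> C * S (Suc i)"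
    if ih: "i < h" for i
  proof -
    let ?l = "Suc i"
    have hs: "h = ?l + (h - ?l)" using ih by simp
    have eqtm: "tm i (\<tau>0 @ \<tau>') = M_seq U m fk (Suc ?l) \<tau>' (R ?l \<tau>0)" if t0: "\<tau>0 \<in> hists ?l" for \<tau>0 \<tau>'
    proof -
      have l0: "length \<tau>0 = Suc i" using t0 by (simp add: hists_def)
      then have ne: "\<tau>0 \<noteq> []" by auto
      have a: "(\<tau>0 @ \<tau>') ! i = last \<tau>0" using l0 ne by (simp add: nth_append last_conv_nth)
      have b: "take i (\<tau>0 @ \<tau>') = butlast \<tau>0" using l0 by (simp add: butlast_conv_take)
      have c: "drop (Suc i) (\<tau>0 @ \<tau>') = \<tau>'" using l0 by simp
      show ?thesis unfolding tm_def R_def a b c ..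
    qed
    have "(\<Sum>\<tau>\<in>hists h. norm1_on (U (Suc h)) (tm i \<tau>) * pol_prob \<pi> \<tau>)
       = (\<Sum>\<tau>0\<in>hists ?l. \<Sum>\<tau>'\<in>hists (h - ?l). norm1_on (U (Suc h)) (tm i (\<tau>0 @ \<tau>')) * pol_prob \<pi> (\<tau>0 @ \<tau>'))"
      using hists_append_sum[where l="?l" and n="h - ?l" and g="\<lambda>\<tau>. norm1_on (U (Suc h)) (tm i \<tau>) * pol_prob \<pi> \<tau>"] hs
      by simp
    also have "\<dots> = (\<Sum>\<tau>0\<in>hists ?l. pol_prob \<pi> \<tau>0 * (\<Sum>\<tau>'\<in>hists (h - ?l). pcond \<pi> \<tau>0 \<tau>' * norm1_on (U (Suc h)) (M_seq U m fk (Suc ?l) \<tau>' (R ?l \<tau>0))))"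
    proof (rule sum.cong[OF refl])
      fix \<tau>0 :: "('ob,'a) hist" assume t0: "\<tau>0 \<in> hists ?l"
      show "(\<Sum>\<tau>'\<in>hists (h - ?l). norm1_on (U (Suc h)) (tm i (\<tau>0 @ \<tau>')) * pol_prob \<pi> (\<tau>0 @ \<tau>'))
          = pol_prob \<pi> \<tau>0 * (\<Sum>\<tau>'\<in>hists (h - ?l). pcond \<pi> \<tau>0 \<tau>' * norm1_on (U (Suc h)) (M_seq U m fk (Suc ?l) \<tau>' (R ?l \<tau>0)))"
        by (simp add: eqtm[OF t0] pol_prob_append sum_distrib_left mult_ac)
    qed
    also have "\<dots> \<le> (\<Sum>\<tau>0\<in>hists ?l. pol_prob \<pi> \<tau>0 * (C * norm1_on (U (Suc ?l)) (R ?l \<tau>0)))"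
    proof (rule sum_mono)
      fix \<tau>0 :: "('ob,'a) hist" assume t0: "\<tau>0 \<in> hists ?l"
      have "pol_prob \<pi> \<tau>0 \<ge> 0" using pol_prob_nonneg[OF pol] t0 ih hH by (simp add: hists_def)
      moreover have "(\<Sum>\<tau>'\<in>hists (h - ?l). pcond \<pi> \<tau>0 \<tau>' * norm1_on (U (Suc h)) (M_seq U m fk (Suc ?l) \<tau>' (R ?l \<tau>0)))
          \<le> C * norm1_on (U (Suc ?l)) (R ?l \<tau>0)"
        unfolding C_def
        by (rule main_term[where H=H and fk=fk and U=U and m=m and \<pi>=\<pi> and \<alpha>=\<alpha>, OF vk pol alpha_pos coreK KdagK reprK colspK UAge _ hH t0]) (simp_all add: Suc_leI[OF ih])
      ultimately show "pol_prob \<pi> \<tau>0 * (\<Sum>\<tau>'\<in>hists (h - ?l). pcond \<pi> \<tau>0 \<tau>' * norm1_on (U (Suc h)) (M_seq U m fk (Suc ?l) \<tau>' (R ?l \<tau>0)))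
          \<le> pol_prob \<pi> \<tau>0 * (C * norm1_on (U (Suc ?l)) (R ?l \<tau>0))"
        by (rule mult_left_mono[rotated])
    qed
    also have "\<dots> = C * S ?l" by (simp add: S_def sum_distrib_left mult_ac)
    finally show ?thesis .
  qed
  have "(\<Sum>\<tau>\<in>hists h. norm1_on (U (Suc h)) (D \<tau>) * pol_prob \<pi> \<tau>)
      \<le> (\<Sum>\<tau>\<in>hists h. (norm1_on (U (Suc h)) (M_seq U m fk 1 \<tau> y0) + (\<Sum>i<h. norm1_on (U (Suc h)) (tm i \<tau>))) * pol_prob \<pi> \<tau>)"
  proof (rule sum_mono)
    fix \<tau> :: "('ob,'a) hist" assume t: "\<tau> \<in> hists h"
    show "norm1_on (U (Suc h)) (D \<tau>) * pol_prob \<pi> \<tau>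
      \<le> (norm1_on (U (Suc h)) (M_seq U m fk 1 \<tau> y0) + (\<Sum>i<h. norm1_on (U (Suc h)) (tm i \<tau>))) * pol_prob \<pi> \<tau>"
      by (rule mult_right_mono[OF tri[OF t] pnn[OF t]])
  qed
  also have "\<dots> = (\<Sum>\<tau>\<in>hists h. norm1_on (U (Suc h)) (M_seq U m fk 1 \<tau> y0) * pol_prob \<pi> \<tau>)
      + (\<Sum>i<h. \<Sum>\<tau>\<in>hists h. norm1_on (U (Suc h)) (tm i \<tau>) * pol_prob \<pi> \<tau>)"
    by (simp add: distrib_right sum.distrib sum_distrib_right sum.swap[of _ "{..<h}"])
  also have "\<dots> \<le> C * norm1_on (U 1) y0 + (\<Sum>i<h. C * S (Suc i))"
    by (intro add_mono T0 sum_mono Ti) simp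
  also have "(\<Sum>i<h. C * S (Suc i)) = C * (\<Sum>l=1..h. S l)"
    by (simp add: sum_distrib_left sum.atLeast1_atMost_eq)
  finally have fin: "(\<Sum>\<tau>\<in>hists h. norm1_on (U (Suc h)) (D \<tau>) * pol_prob \<pi> \<tau>) \<le> C * ((\<Sum>l=1..h. S l) + norm1_on (U 1) y0)"
    by (simp add: distrib_left)
  show ?thesis using fin unfolding D_def C_def S_def R_def y0_def by simp
qed

end
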